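(* Let $a:[0,1]\to[0,\infty)$ be bounded and measurable, let $T_0>0$ be the uniform observability time described in the context, let $T>T_0$, and let $\lambda\in H^1(0,T)$ with $\lambda(0)\ne0$. Then there exists $\kappa>0$, independent of $N$ (i.e. of $h$), such that for every $N\ge1$ and all $\widehat F_h,\widetilde F_h\in\mathbb{C}^N$, $$\|\widehat F_h-\widetilde F_h\|_M\le \kappa\,\|\widehat Y_h-\widetilde Y_h\|_{[L^2(0,T)]^2},$$ where, for $F_h\in\{\widehat F_h,\widetilde F_h\}$, $V_h=[v_j]_{1\le j\le N}$ is the solution of $M_hV_h''+K_hV_h+L_hV_h=\lambda(t)M_hF_h$ on $(0,T)$, $V_h(0)=V_h'(0)=0$, and the observation is $Y_h(t)=\big(\tfrac1h(v_1'(t)+u_1(t)),\ \tfrac12(v_1''(t)+u_1'(t))\big)$, with $U_h=[u_j]$ a fixed (the same for both) solution of $M_hU_h''+K_hU_h+L_hU_h=0$. (In particular $\widehat Y_h-\widetilde Y_h=\big(\tfrac1h(\widehat v_1'-\widetilde v_1'),\tfrac12(\widehat v_1''-\widetilde v_1'')\big)$ does not depend on $U_h$.)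
   Context: For $N\ge1$, $h=1/(N+1)$, $x_j=jh$, $a_j=a(x_j)$. Matrices: $K_h=\frac1h\mathrm{tridiag}(-1,2,-1)$, $M_h=\frac h4\mathrm{tridiag}(1,2,1)$, $L_h=h\,\mathrm{diag}(a_1,\dots,a_N)$ (all $N\times N$). On $\mathbb{C}^N$: $\langle U,W\rangle=\sum_j u_j\overline{w_j}$, $\langle U,W\rangle_1=\langle(K_h+L_h)U,W\rangle$, $\langle U,W\rangle_M=\langle M_hU,W\rangle$, norms $\|\cdot\|_1,\|\cdot\|_M$. $T_0>0$ denotes a time, independent of $h$, for which there is $\kappa_0>0$ independent of $h$ such that for all $N$, all $T>T_0$ and all $U^0,U^1\in\mathbb{C}^N$, the solution $U_h=[u_j]$ of $M_hU_h''+K_hU_h+L_hU_h=0$, $U_h(0)=U^0$, $U_h'(0)=U^1$ satisfies $\int_0^T(|u_1/h|^2+|u_1'/2|^2)dt\ge\kappa_0(\|U^0\|_1^2+\|U^1\|_M^2)$ (such $T_0$ exists for bounded measurable $a\ge0$). *)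

theory Defs
  imports "HOL-Analysis.Analysis"
begin

text \<open>Vectors of \<open>\<complex>\<^sup>N\<close> are represented as functions \<open>nat \<Rightarrow> complex\<close>,
  only the components with indices \<open>1..N\<close> being relevant. Matrices are
  functions \<open>nat \<Rightarrow> nat \<Rightarrow> real\<close> with indices in \<open>1..N\<close>.\<close>

definition hN :: "nat \<Rightarrow> real" where
  "hN N = 1 / (real N + 1)"

definition Kh :: "nat \<Rightarrow> nat \<Rightarrow> nat \<Rightarrow> real" where
  "Kh N i j = (1 / hN N) * (if i = j then 2 else if i = j + 1 \<or> j = i + 1 then -1 else 0)"

definition Mh :: "nat \<Rightarrow> nat \<Rightarrow> nat \<Rightarrow> real" where
  "Mh N i j = (hN N / 4) * (if i = j then 2 else if i = j + 1 \<or> j = i + 1 then 1 else 0)"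

definition Lh :: "(real \<Rightarrow> real) \<Rightarrow> nat \<Rightarrow> nat \<Rightarrow> nat \<Rightarrow> real" where
  "Lh a N i j = hN N * (if i = j then a (real i * hN N) else 0)"

definition mv :: "(nat \<Rightarrow> nat \<Rightarrow> real) \<Rightarrow> nat \<Rightarrow> (nat \<Rightarrow> complex) \<Rightarrow> nat \<Rightarrow> complex" where
  "mv A N U i = (\<Sum>j = 1..N. complex_of_real (A i j) * U j)"

definition ip :: "nat \<Rightarrow> (nat \<Rightarrow> complex) \<Rightarrow> (nat \<Rightarrow> complex) \<Rightarrow> complex" where
  "ip N U W = (\<Sum>j = 1..N. U j * cnj (W j))"

definition norm1_sq :: "(real \<Rightarrow> real) \<Rightarrow> nat \<Rightarrow> (nat \<Rightarrow> complex) \<Rightarrow> real" where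
  "norm1_sq a N U = Re (ip N (\<lambda>i. mv (Kh N) N U i + mv (Lh a N) N U i) U)"

definition normM_sq :: "nat \<Rightarrow> (nat \<Rightarrow> complex) \<Rightarrow> real" where
  "normM_sq N U = Re (ip N (mv (Mh N) N U) U)"

definition normM :: "nat \<Rightarrow> (nat \<Rightarrow> complex) \<Rightarrow> real" where
  "normM N U = sqrt (normM_sq N U)"

definition is_sol ::
  "(real \<Rightarrow> real) \<Rightarrow> nat \<Rightarrow> real \<Rightarrow> (real \<Rightarrow> complex) \<Rightarrow> (nat \<Rightarrow> complex)
   \<Rightarrow> (nat \<Rightarrow> real \<Rightarrow> complex) \<Rightarrow> (nat \<Rightarrow> real \<Rightarrow> complex) \<Rightarrow> (nat \<Rightarrow> real \<Rightarrow> complex) \<Rightarrow> bool" where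
  "is_sol a N T f F V V' V'' \<longleftrightarrow>
     (\<forall>j\<in>{1..N}. \<forall>t\<in>{0..T}.
        (V j has_vector_derivative V' j t) (at t within {0..T}) \<and>
        (V' j has_vector_derivative V'' j t) (at t within {0..T})) \<and>
     (\<forall>t\<in>{0..T}. \<forall>i\<in>{1..N}.
        mv (Mh N) N (\<lambda>j. V'' j t) i + mv (Kh N) N (\<lambda>j. V j t) i + mv (Lh a N) N (\<lambda>j. V j t) i
        = f t * mv (Mh N) N F i)"

definition H1 :: "real \<Rightarrow> (real \<Rightarrow> real) \<Rightarrow> bool" where
  "H1 T lam \<longleftrightarrow> (\<exists>g. g absolutely_integrable_on {0..T} \<and> (\<lambda>t. (g t)\<^sup>2) integrable_on {0..T} \<and>
      (\<forall>t\<in>{0..T}. (g has_integral (lam t - lam 0)) {0..t}))"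

definition unif_obs_time :: "(real \<Rightarrow> real) \<Rightarrow> real \<Rightarrow> bool" where
  "unif_obs_time a T0 \<longleftrightarrow> T0 > 0 \<and> (\<exists>\<kappa>0>0. \<forall>N\<ge>1. \<forall>T>T0. \<forall>U U' U''.
      is_sol a N T (\<lambda>_. 0) (\<lambda>_. 0) U U' U'' \<longrightarrow>
      integral {0..T} (\<lambda>t. (cmod (U 1 t / hN N))\<^sup>2 + (cmod (U' 1 t / 2))\<^sup>2)
        \<ge> \<kappa>0 * (norm1_sq a N (\<lambda>j. U j 0) + (normM N (\<lambda>j. U' j 0))\<^sup>2))"

end

theory Submission
  imports Defs
begin

lemma sum_Mh_real:
  fixes X :: "nat \<Rightarrow> real"
  assumes i: "i \<in> {1..N}" and X0: "X 0 = 0" and XN: "X (N+1) = 0"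
  shows "(\<Sum>j=1..N. Mh N i j * X j) = hN N / 4 * (X (i - 1) + 2 * X i + X (i + 1))"
proof -
  have e: "Mh N i j * X j = hN N / 4 * ((if j = i then 2 * X j else 0) + (if j = i + 1 then X j else 0) + (if j = i - 1 then X j else 0))" for j
    unfolding Mh_def using i by auto
  have "(\<Sum>j=1..N. Mh N i j * X j) = hN N / 4 * ((\<Sum>j=1..N. (if j = i then 2 * X j else 0)) + (\<Sum>j=1..N. (if j = i + 1 then X j else 0)) + (\<Sum>j=1..N. (if j = i - 1 then X j else 0)))"
    unfolding e sum_distrib_left[symmetric] sum.distrib by simp
  also have "\<dots> = hN N / 4 * (X (i - 1) + 2 * X i + X (i + 1))"
    using i X0 XN by (cases "i = N") (auto simp: sum.delta')
  finally show ?thesis .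
qed

definition Gm :: "nat \<Rightarrow> nat \<Rightarrow> nat \<Rightarrow> real" where
  "Gm N j k = (-1) ^ (j + k) * real (min j k) * (real N + 1 - real (max j k)) / (real N + 1)"

lemma Gm_second_diff:
  assumes i: "i \<in> {1..N}" and k: "k \<in> {1..N}"
  shows "Gm N (i - 1) k + 2 * Gm N i k + Gm N (i + 1) k = (if i = k then 1 else 0)"
proof -
  obtain m where m: "i = Suc m" using i by (cases i) auto
  define s where "s = ((-1::real) ^ (Suc m + k))"
  have s1: "(-1::real) ^ (m + k) = - s" unfolding s_def by simp
  have s2: "(-1::real) ^ (Suc (Suc m) + k) = - s" unfolding s_def by simp
  have NN: "real N + 1 > 0" by simp
 have e: "Gm N (i - 1) k + 2 * Gm N i k + Gm N (i + 1) k = Gm N m k + 2 * Gm N (Suc m) k + Gm N (Suc (Suc m)) k" using m by simp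
  consider "Suc m < k" | "Suc m = k" | "Suc m > k" by linarith
  then show ?thesis
  proof cases
    case 1
    have a: "Gm N m k = - s * real m * (real N + 1 - real k) / (real N + 1)"
      unfolding Gm_def s1 using 1 by (simp add: min_def max_def)
    have b: "Gm N (Suc m) k = s * (real m + 1) * (real N + 1 - real k) / (real N + 1)"
      unfolding Gm_def s_def using 1 by (simp add: min_def max_def)
    have c: "Gm N (Suc (Suc m)) k = - s * (real m + 2) * (real N + 1 - real k) / (real N + 1)"
      unfolding Gm_def s2 using 1 by (simp add: min_def max_def)
    have "Gm N m k + 2 * Gm N (Suc m) k + Gm N (Suc (Suc m)) k = (- s * real m + 2 * (s * (real m + 1)) - s * (real m + 2)) * (real N + 1 - real k) / (real N + 1)"
      unfolding a b c by (simp add: add_divide_distrib diff_divide_distrib algebra_simps)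
    also have "\<dots> = 0" by (simp add: algebra_simps)
    finally show ?thesis using e 1 m by simp
  next
    case 2
    have s0: "s = 1" unfolding s_def 2[symmetric] by (simp add: mult_2[symmetric])
    have a: "Gm N m k = - real m * (real N + 1 - real k) / (real N + 1)"
      unfolding Gm_def s1 s0 using 2 by (simp add: min_def max_def)
    have b: "Gm N (Suc m) k = real k * (real N + 1 - real k) / (real N + 1)"
      unfolding Gm_def using 2 by (simp add: min_def max_def mult_2[symmetric])
    have c: "Gm N (Suc (Suc m)) k = - real k * (real N - real k) / (real N + 1)"
      unfolding Gm_def s2 s0 using 2 by (simp add: min_def max_def)
    have "Gm N m k + 2 * Gm N (Suc m) k + Gm N (Suc (Suc m)) k = (- real m * (real N + 1 - real k) + 2 * (real k * (real N + 1 - real k)) - real k * (real N - real k)) / (real N + 1)"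
      unfolding a b c by (simp add: add_divide_distrib diff_divide_distrib algebra_simps)
    also have "\<dots> = (real N + 1) / (real N + 1)" unfolding 2[symmetric] by (simp add: algebra_simps)
    also have "\<dots> = 1" using NN by simp
    finally show ?thesis using e 2 m by simp
  next
    case 3
    have km: "k \<le> m" using 3 by simp
    have a: "Gm N m k = - s * real k * (real N + 1 - real m) / (real N + 1)"
      unfolding Gm_def s1 using km by (simp add: min_absorb2 max_absorb1)
    have b: "Gm N (Suc m) k = s * real k * (real N - real m) / (real N + 1)"
      unfolding Gm_def s_def using 3 by (simp add: min_def max_def)
    have c: "Gm N (Suc (Suc m)) k = - s * real k * (real N - 1 - real m) / (real N + 1)"
      unfolding Gm_def s2 using 3 by (simp add: min_def max_def)
    have "Gm N m k + 2 * Gm N (Suc m) k + Gm N (Suc (Suc m)) k = s * real k * (- (real N + 1 - real m) + 2 * (real N - real m) - (real N - 1 - real m)) / (real N + 1)"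
      unfolding a b c by (simp add: add_divide_distrib diff_divide_distrib algebra_simps)
    also have "\<dots> = 0" by (simp add: algebra_simps)
    finally show ?thesis using e 3 m by simp
  qed
qed

definition Minv :: "nat \<Rightarrow> nat \<Rightarrow> nat \<Rightarrow> real" where
  "Minv N j k = 4 / hN N * Gm N j k"

lemma hN_pos: "hN N > 0" unfolding hN_def by simp

lemma Mh_sym: "Mh N i j = Mh N j i" unfolding Mh_def by auto
lemma Gm_sym: "Gm N i j = Gm N j i" unfolding Gm_def by (simp add: min.commute max.commute add.commute)
lemma Minv_sym: "Minv N i j = Minv N j i" unfolding Minv_def using Gm_sym by simp

lemma M_Minv:
  assumes i: "i \<in> {1..N}" and k: "k \<in> {1..N}"
  shows "(\<Sum>j=1..N. Mh N i j * Minv N j k) = (if i = k then 1 else 0)"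
proof -
  have X0: "Minv N 0 k = 0" unfolding Minv_def Gm_def by simp
  have XN: "Minv N (N+1) k = 0" unfolding Minv_def Gm_def using k by (simp add: max_def)
  have "(\<Sum>j=1..N. Mh N i j * Minv N j k) = hN N / 4 * (Minv N (i - 1) k + 2 * Minv N i k + Minv N (i + 1) k)"
    by (rule sum_Mh_real[OF i X0 XN])
  also have "\<dots> = hN N / 4 * (4 / hN N) * (Gm N (i - 1) k + 2 * Gm N i k + Gm N (i + 1) k)"
    unfolding Minv_def by (simp add: algebra_simps)
  also have "\<dots> = (if i = k then 1 else 0)"
    using Gm_second_diff[OF i k] hN_pos[of N] by simp
  finally show ?thesis .
qed

lemma Minv_M:
  assumes i: "i \<in> {1..N}" and k: "k \<in> {1..N}"
  shows "(\<Sum>j=1..N. Minv N i j * Mh N j k) = (if i = k then 1 else 0)"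
proof -
  have "(\<Sum>j=1..N. Minv N i j * Mh N j k) = (\<Sum>j=1..N. Mh N k j * Minv N j i)"
    by (simp add: Minv_sym Mh_sym mult.commute)
  also have "\<dots> = (if k = i then 1 else 0)" by (rule M_Minv[OF k i])
  finally show ?thesis by auto
qed

lemma mv_mv:
  "mv A N (mv B N y) i = (\<Sum>k=1..N. complex_of_real (\<Sum>j=1..N. A i j * B j k) * y k)"
  unfolding mv_def of_real_sum sum_distrib_left sum_distrib_right
  by (subst sum.swap) (simp add: mult.assoc)

lemma mv_M_Minv:
  assumes i: "i \<in> {1..N}"
  shows "mv (Mh N) N (mv (Minv N) N y) i = y i"
proof -
  have "(\<Sum>k=1..N. complex_of_real (\<Sum>j=1..N. Mh N i j * Minv N j k) * y k) = (\<Sum>k=1..N. if i = k then y k else 0)"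
  proof (rule sum.cong)
    fix k assume k: "k \<in> {1..N}"
    show "complex_of_real (\<Sum>j=1..N. Mh N i j * Minv N j k) * y k = (if i = k then y k else 0)"
      unfolding M_Minv[OF i k] by simp
  qed simp
  then show ?thesis unfolding mv_mv using i by simp
qed

lemma mv_Minv_M:
  assumes i: "i \<in> {1..N}"
  shows "mv (Minv N) N (mv (Mh N) N y) i = y i"
proof -
  have "(\<Sum>k=1..N. complex_of_real (\<Sum>j=1..N. Minv N i j * Mh N j k) * y k) = (\<Sum>k=1..N. if i = k then y k else 0)"
  proof (rule sum.cong)
    fix k assume k: "k \<in> {1..N}"
    show "complex_of_real (\<Sum>j=1..N. Minv N i j * Mh N j k) * y k = (if i = k then y k else 0)"
      unfolding Minv_M[OF i k] by simp
  qed simp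
  then show ?thesis unfolding mv_mv using i by simp
qed

lemma mv_cong: "(\<And>j. j \<in> {1..N} \<Longrightarrow> x j = y j) \<Longrightarrow> mv A N x i = mv A N y i"
  unfolding mv_def by (auto intro!: sum.cong)

lemma mv_add: "mv A N (\<lambda>j. x j + y j) i = mv A N x i + mv A N y i"
  unfolding mv_def by (simp add: sum.distrib algebra_simps)
lemma mv_diff: "mv A N (\<lambda>j. x j - y j) i = mv A N x i - mv A N y i"
  unfolding mv_def by (simp add: sum_subtractf algebra_simps)
lemma mv_cmult: "mv A N (\<lambda>j. c * x j) i = c * mv A N x i"
  unfolding mv_def by (simp add: sum_distrib_left algebra_simps)
lemma mv_uminus: "mv A N (\<lambda>j. - x j) i = - mv A N x i"
  unfolding mv_def by (simp add: sum_negf)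
lemma mv_zero: "mv A N (\<lambda>j. 0) i = 0"
  unfolding mv_def by simp

definition nrm :: "nat \<Rightarrow> (nat \<Rightarrow> complex) \<Rightarrow> real" where
  "nrm N x = (\<Sum>j=1..N. cmod (x j))"

definition mA :: "nat \<Rightarrow> (nat \<Rightarrow> nat \<Rightarrow> real) \<Rightarrow> real" where
  "mA N A = (\<Sum>i=1..N. \<Sum>j=1..N. \<bar>A i j\<bar>)"

lemma nrm_nonneg: "nrm N x \<ge> 0" unfolding nrm_def by (simp add: sum_nonneg)
lemma mA_nonneg: "mA N A \<ge> 0" unfolding mA_def by (simp add: sum_nonneg)

lemma comp_le_nrm: "j \<in> {1..N} \<Longrightarrow> cmod (x j) \<le> nrm N x"
  unfolding nrm_def by (rule member_le_sum) auto

lemma mv_bound: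
  assumes i: "i \<in> {1..N}"
  shows "cmod (mv A N x i) \<le> mA N A * nrm N x"
proof -
  have Aij: "\<bar>A i j\<bar> \<le> mA N A" if j: "j \<in> {1..N}" for j
  proof -
    have "\<bar>A i j\<bar> \<le> (\<Sum>j=1..N. \<bar>A i j\<bar>)" by (rule member_le_sum[OF j]) auto
    also have "\<dots> \<le> mA N A" unfolding mA_def by (rule member_le_sum[OF i]) (auto intro: sum_nonneg)
    finally show ?thesis .
  qed
  have "cmod (mv A N x i) \<le> (\<Sum>j=1..N. cmod (complex_of_real (A i j) * x j))"
    unfolding mv_def by (rule norm_sum)
  also have "\<dots> \<le> (\<Sum>j=1..N. mA N A * cmod (x j))"
    by (rule sum_mono) (auto simp: norm_mult intro!: mult_right_mono Aij)
  finally show ?thesis unfolding nrm_def by (simp add: sum_distrib_left)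
qed

definition Amv :: "(real \<Rightarrow> real) \<Rightarrow> nat \<Rightarrow> (nat \<Rightarrow> complex) \<Rightarrow> nat \<Rightarrow> complex" where
  "Amv a N x k = mv (Kh N) N x k + mv (Lh a N) N x k"

definition Bop :: "(real \<Rightarrow> real) \<Rightarrow> nat \<Rightarrow> (nat \<Rightarrow> complex) \<Rightarrow> nat \<Rightarrow> complex" where
  "Bop a N x i = mv (Minv N) N (Amv a N x) i"

definition cB :: "(real \<Rightarrow> real) \<Rightarrow> nat \<Rightarrow> real" where
  "cB a N = mA N (Minv N) * (real N * (mA N (Kh N) + mA N (Lh a N)))"

lemma cB_nonneg: "cB a N \<ge> 0" unfolding cB_def by (simp add: mA_nonneg)

lemma Bop_bound:
  assumes i: "i \<in> {1..N}"
  shows "cmod (Bop a N x i) \<le> cB a N * nrm N x"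
proof -
  have "nrm N (Amv a N x) \<le> (\<Sum>k=1..N. (mA N (Kh N) + mA N (Lh a N)) * nrm N x)"
    unfolding nrm_def[of N "Amv a N x"] Amv_def
  proof (rule sum_mono)
    fix k assume k: "k \<in> {1..N}"
    show "cmod (mv (Kh N) N x k + mv (Lh a N) N x k) \<le> (mA N (Kh N) + mA N (Lh a N)) * nrm N x"
      using norm_triangle_ineq[of "mv (Kh N) N x k" "mv (Lh a N) N x k"] mv_bound[OF k, of "Kh N" x] mv_bound[OF k, of "Lh a N" x]
      by (simp add: algebra_simps)
  qed
  also have "\<dots> = real N * (mA N (Kh N) + mA N (Lh a N)) * nrm N x" by simp
  finally have 1: "nrm N (Amv a N x) \<le> real N * (mA N (Kh N) + mA N (Lh a N)) * nrm N x" .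
  have "cmod (Bop a N x i) \<le> mA N (Minv N) * nrm N (Amv a N x)"
    unfolding Bop_def by (rule mv_bound[OF i])
  also have "\<dots> \<le> mA N (Minv N) * (real N * (mA N (Kh N) + mA N (Lh a N)) * nrm N x)"
    by (rule mult_left_mono[OF 1 mA_nonneg])
  finally show ?thesis unfolding cB_def by (simp add: algebra_simps)
qed

lemma nrm_Bop: "nrm N (Bop a N x) \<le> real N * cB a N * nrm N x"
proof -
  have "nrm N (Bop a N x) \<le> (\<Sum>k=1..N. cB a N * nrm N x)"
    unfolding nrm_def[of N "Bop a N x"] by (rule sum_mono) (rule Bop_bound)
  then show ?thesis by simp
qed

definition S :: "(nat \<Rightarrow> complex) \<Rightarrow> real \<Rightarrow> complex" where
  "S c t = (\<Sum>n. (c n / of_nat (fact n)) * (complex_of_real t) ^ n)"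

definition geo_bdd :: "(nat \<Rightarrow> complex) \<Rightarrow> bool" where
  "geo_bdd c \<longleftrightarrow> (\<exists>C R. R \<ge> 0 \<and> (\<forall>n. cmod (c n) \<le> C * R ^ n))"

lemma geo_bdd_shift: "geo_bdd c \<Longrightarrow> geo_bdd (\<lambda>n. c (Suc n))"
  unfolding geo_bdd_def
proof (elim exE conjE)
  fix C R assume R: "R \<ge> (0::real)" and b: "\<forall>n. cmod (c n) \<le> C * R ^ n"
  show "\<exists>C R. R \<ge> 0 \<and> (\<forall>n. cmod (c (Suc n)) \<le> C * R ^ n)"
  proof -
    have "cmod (c (Suc n)) \<le> (C * R) * R ^ n" for n
      using b[rule_format, of "Suc n"] by (simp add: mult.assoc)
    then show ?thesis using R by blast
  qed
qed

lemma geo_summable: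
  assumes "geo_bdd c"
  shows "summable (\<lambda>n. (c n / of_nat (fact n)) * y ^ n)"
proof -
  obtain C R where R: "R \<ge> 0" and b: "\<And>n. cmod (c n) \<le> C * R ^ n"
    using assms unfolding geo_bdd_def by blast
  have s: "summable (\<lambda>n. C * (inverse (fact n) * (R * cmod y) ^ n))"
    by (intro summable_mult summable_exp)
  show ?thesis
  proof (rule summable_comparison_test'[OF s])
    fix n
    have "cmod (c n / of_nat (fact n) * y ^ n) = cmod (c n) / fact n * cmod y ^ n"
      by (simp add: norm_mult norm_divide norm_power)
    also have "\<dots> \<le> C * R ^ n / fact n * cmod y ^ n"
      by (intro mult_right_mono divide_right_mono b) auto
    also have "\<dots> = C * (inverse (fact n) * (R * cmod y) ^ n)"
      by (simp add: power_mult_distrib field_simps)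
    finally show "norm (c n / of_nat (fact n) * y ^ n) \<le> C * (inverse (fact n) * (R * cmod y) ^ n)" .
  qed
qed

lemma diffs_fact: "diffs (\<lambda>n. c n / of_nat (fact n)) n = (c (Suc n) / of_nat (fact n) :: complex)"
  unfolding diffs_def by (metis of_nat_fact fact_cancel times_divide_eq_right)

lemma S_deriv:
  assumes "geo_bdd c"
  shows "(S c has_vector_derivative S (\<lambda>n. c (Suc n)) t) (at t)"
proof -
  let ?g = "\<lambda>z. \<Sum>n. (c n / of_nat (fact n)) * z ^ n"
  have d: "(?g has_field_derivative (\<Sum>n. diffs (\<lambda>n. c n / of_nat (fact n)) n * z ^ n)) (at z)" for z
    by (rule termdiffs_strong_converges_everywhere) (rule geo_summable[OF assms])
  have o: "(complex_of_real has_vector_derivative 1) (at t)"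
    using has_vector_derivative_of_real[OF DERIV_ident[of "at t"]] by simp
  have "((?g \<circ> complex_of_real) has_vector_derivative (1 * (\<Sum>n. diffs (\<lambda>n. c n / of_nat (fact n)) n * (complex_of_real t) ^ n))) (at t)"
    by (rule field_vector_diff_chain_at[OF o d])
  then show ?thesis unfolding S_def diffs_fact by (simp add: o_def)
qed

lemma S_deriv_within:
  "geo_bdd c \<Longrightarrow> (S c has_vector_derivative S (\<lambda>n. c (Suc n)) t) (at t within A)"
  using S_deriv has_vector_derivative_at_within by blast

lemma S_cont: "geo_bdd c \<Longrightarrow> continuous_on A (S c)"
  by (meson S_deriv continuous_at_imp_continuous_on has_vector_derivative_continuous)

lemma S_zero: "S c 0 = c 0"
  unfolding S_def of_real_0 powser_zero by simp

lemma S_uminus: "geo_bdd c \<Longrightarrow> S (\<lambda>n. - c n) t = - S c t"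
  unfolding S_def using geo_summable[of c "complex_of_real t"]
  by (simp add: suminf_minus[symmetric])

lemma S_mv:
  assumes "\<And>l. l \<in> {1..N} \<Longrightarrow> geo_bdd (c l)"
  shows "S (\<lambda>n. mv A N (\<lambda>l. c l n) i) t = mv A N (\<lambda>l. S (c l) t) i"
proof -
  have "S (\<lambda>n. mv A N (\<lambda>l. c l n) i) t = (\<Sum>n. \<Sum>l=1..N. complex_of_real (A i l) * ((c l n / of_nat (fact n)) * (complex_of_real t) ^ n))"
    unfolding S_def mv_def by (simp add: sum_divide_distrib sum_distrib_right mult.assoc)
  also have "\<dots> = (\<Sum>l=1..N. \<Sum>n. complex_of_real (A i l) * ((c l n / of_nat (fact n)) * (complex_of_real t) ^ n))"
    by (rule suminf_sum) (intro summable_mult geo_summable assms)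
  also have "\<dots> = mv A N (\<lambda>l. S (c l) t) i"
    unfolding mv_def S_def
  proof (rule sum.cong)
    fix l assume l: "l \<in> {1..N}"
    show "(\<Sum>n. complex_of_real (A i l) * ((c l n / of_nat (fact n)) * (complex_of_real t) ^ n)) = complex_of_real (A i l) * (\<Sum>n. (c l n / of_nat (fact n)) * (complex_of_real t) ^ n)"
      by (rule suminf_mult[OF geo_summable[OF assms[OF l]]])
  qed simp
  finally show ?thesis .
qed

lemma geo_bdd_nrm:
  assumes j: "j \<in> {1..N}" and R: "R \<ge> 0" and b: "\<And>n. nrm N (D n) \<le> C * R ^ n"
  shows "geo_bdd (\<lambda>n. D n j)"
  unfolding geo_bdd_def using R comp_le_nrm[OF j] b order_trans by blast

fun Dseq :: "(real \<Rightarrow> real) \<Rightarrow> nat \<Rightarrow> (nat \<Rightarrow> complex) \<Rightarrow> nat \<Rightarrow> nat \<Rightarrow> complex" where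
  "Dseq a N F 0 = (\<lambda>_. 0)"
| "Dseq a N F (Suc 0) = F"
| "Dseq a N F (Suc (Suc n)) = (\<lambda>i. - Bop a N (Dseq a N F n) i)"

definition RD :: "(real \<Rightarrow> real) \<Rightarrow> nat \<Rightarrow> real" where
  "RD a N = 1 + real N * cB a N"

lemma RD_ge1: "RD a N \<ge> 1" unfolding RD_def using cB_nonneg[of a N] by simp

lemma nrm_uminus: "nrm N (\<lambda>i. - x i) = nrm N x" unfolding nrm_def by simp

lemma Dseq_bound: "nrm N (Dseq a N F n) \<le> nrm N F * RD a N ^ n"
proof (induction n rule: nat_less_induct)
  case (1 n)
  have R1: "RD a N \<ge> 1" by (rule RD_ge1)
  have nF: "nrm N F \<ge> 0" by (rule nrm_nonneg)
  show ?case
  proof (cases n)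
    case 0
    then show ?thesis using nF by (simp add: nrm_def)
  next
    case (Suc m)
    show ?thesis
    proof (cases m)
      case 0
      then show ?thesis using Suc nF R1 by (simp add: mult_le_cancel_left1)
    next
      case (Suc k)
      have IH: "nrm N (Dseq a N F k) \<le> nrm N F * RD a N ^ k"
        using 1 \<open>n = Suc m\<close> Suc by simp
      have c: "real N * cB a N \<le> RD a N ^ 2"
      proof -
        have "real N * cB a N \<le> RD a N" unfolding RD_def by simp
        also have "\<dots> \<le> RD a N ^ 2" using R1 by (simp add: power2_eq_square)
        finally show ?thesis .
      qed
      have "nrm N (Dseq a N F n) = nrm N (Bop a N (Dseq a N F k))"
        using \<open>n = Suc m\<close> Suc by (simp add: nrm_uminus)
      also have "\<dots> \<le> real N * cB a N * nrm N (Dseq a N F k)" by (rule nrm_Bop)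
      also have "\<dots> \<le> RD a N ^ 2 * (nrm N F * RD a N ^ k)"
        by (rule mult_mono[OF c IH]) (use R1 nrm_nonneg in auto)
      also have "\<dots> = nrm N F * RD a N ^ n"
        using \<open>n = Suc m\<close> Suc by (simp add: power2_eq_square)
      finally show ?thesis .
    qed
  qed
qed

lemma geo_Dseq: "j \<in> {1..N} \<Longrightarrow> geo_bdd (\<lambda>n. Dseq a N F (n + k) j)"
  unfolding geo_bdd_def
proof -
  assume j: "j \<in> {1..N}"
  have "cmod (Dseq a N F (n + k) j) \<le> (nrm N F * RD a N ^ k) * RD a N ^ n" for n
    using comp_le_nrm[OF j, of "Dseq a N F (n + k)"] Dseq_bound[of N a F "n + k"]
    by (simp add: power_add mult_ac)
  then show "\<exists>C R. 0 \<le> R \<and> (\<forall>n. cmod (Dseq a N F (n + k) j) \<le> C * R ^ n)"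
    using RD_ge1[of a N] by (meson order_trans zero_le_one)
qed

definition Aa :: "(real \<Rightarrow> real) \<Rightarrow> nat \<Rightarrow> nat \<Rightarrow> nat \<Rightarrow> real" where
  "Aa a N i j = Kh N i j + Lh a N i j"

lemma Amv_Aa: "Amv a N x i = mv (Aa a N) N x i"
  unfolding Amv_def Aa_def mv_def by (simp add: sum.distrib algebra_simps)

lemma geo_mv:
  assumes i: "i \<in> {1..N}"
  shows "geo_bdd (\<lambda>n. mv A N (Dseq a N F (n + k)) i)"
  unfolding geo_bdd_def
proof -
  have "cmod (mv A N (Dseq a N F (n + k)) i) \<le> (mA N A * (nrm N F * RD a N ^ k)) * RD a N ^ n" for n
  proof -
    have "cmod (mv A N (Dseq a N F (n + k)) i) \<le> mA N A * nrm N (Dseq a N F (n + k))"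
      by (rule mv_bound[OF i])
    also have "\<dots> \<le> mA N A * (nrm N F * RD a N ^ (n + k))"
      by (rule mult_left_mono[OF Dseq_bound mA_nonneg])
    finally show ?thesis by (simp add: power_add mult_ac)
  qed
  then show "\<exists>C R. 0 \<le> R \<and> (\<forall>n. cmod (mv A N (Dseq a N F (n + k)) i) \<le> C * R ^ n)"
    using RD_ge1[of a N] by (meson order_trans zero_le_one)
qed

lemma geo_Bop:
  assumes i: "i \<in> {1..N}"
  shows "geo_bdd (\<lambda>n. Bop a N (Dseq a N F (n + k)) i)"
  unfolding geo_bdd_def
proof -
  have "cmod (Bop a N (Dseq a N F (n + k)) i) \<le> (cB a N * (nrm N F * RD a N ^ k)) * RD a N ^ n" for n
  proof -
    have "cmod (Bop a N (Dseq a N F (n + k)) i) \<le> cB a N * nrm N (Dseq a N F (n + k))"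
      by (rule Bop_bound[OF i])
    also have "\<dots> \<le> cB a N * (nrm N F * RD a N ^ (n + k))"
      by (rule mult_left_mono[OF Dseq_bound cB_nonneg])
    finally show ?thesis by (simp add: power_add mult_ac)
  qed
  then show "\<exists>C R. 0 \<le> R \<and> (\<forall>n. cmod (Bop a N (Dseq a N F (n + k)) i) \<le> C * R ^ n)"
    using RD_ge1[of a N] by (meson order_trans zero_le_one)
qed

definition Phi :: "(real \<Rightarrow> real) \<Rightarrow> nat \<Rightarrow> (nat \<Rightarrow> complex) \<Rightarrow> nat \<Rightarrow> nat \<Rightarrow> real \<Rightarrow> complex" where
  "Phi a N F k j t = S (\<lambda>n. Dseq a N F (n + k) j) t"

lemma Phi_deriv: "j \<in> {1..N} \<Longrightarrow> (Phi a N F k j has_vector_derivative Phi a N F (Suc k) j t) (at t)"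
  unfolding Phi_def using S_deriv[OF geo_Dseq, of j N a F k t] by simp

lemma Phi_deriv_within: "j \<in> {1..N} \<Longrightarrow> (Phi a N F k j has_vector_derivative Phi a N F (Suc k) j t) (at t within A)"
  using Phi_deriv has_vector_derivative_at_within by blast

lemma Phi_cont: "j \<in> {1..N} \<Longrightarrow> continuous_on A (Phi a N F k j)"
  unfolding Phi_def by (rule S_cont[OF geo_Dseq])

lemma Phi0: "Phi a N F 0 j 0 = 0" unfolding Phi_def S_zero by simp
lemma Phi1: "Phi a N F 1 j 0 = F j" unfolding Phi_def S_zero by simp

lemma Phi_SS:
  assumes j: "j \<in> {1..N}"
  shows "Phi a N F (Suc (Suc k)) j t = - Bop a N (\<lambda>l. Phi a N F k l t) j"
proof -
  have "Phi a N F (Suc (Suc k)) j t = S (\<lambda>n. - Bop a N (Dseq a N F (n + k)) j) t"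
  proof -
    have "Dseq a N F (n + Suc (Suc k)) j = - Bop a N (Dseq a N F (n + k)) j" for n
      by (simp only: add_Suc_right Dseq.simps)
    then show ?thesis unfolding Phi_def by simp
  qed
  also have "\<dots> = - S (\<lambda>n. Bop a N (Dseq a N F (n + k)) j) t"
  proof (rule S_uminus)
    show "geo_bdd (\<lambda>n. Bop a N (Dseq a N F (n + k)) j)"
      by (rule geo_Bop[OF j])
  qed
  also have "S (\<lambda>n. Bop a N (Dseq a N F (n + k)) j) t = Bop a N (\<lambda>l. Phi a N F k l t) j"
  proof -
    have "S (\<lambda>n. Bop a N (Dseq a N F (n + k)) j) t = S (\<lambda>n. mv (Minv N) N (\<lambda>l. mv (Aa a N) N (Dseq a N F (n + k)) l) j) t"
      unfolding Bop_def Amv_Aa ..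
    also have "\<dots> = mv (Minv N) N (\<lambda>l. S (\<lambda>n. mv (Aa a N) N (Dseq a N F (n + k)) l) t) j"
      by (rule S_mv) (rule geo_mv)
    also have "\<dots> = mv (Minv N) N (\<lambda>l. mv (Aa a N) N (\<lambda>m. Phi a N F k m t) l) j"
    proof (rule mv_cong)
      fix l assume l: "l \<in> {1..N}"
      show "S (\<lambda>n. mv (Aa a N) N (Dseq a N F (n + k)) l) t = mv (Aa a N) N (\<lambda>m. Phi a N F k m t) l"
        unfolding Phi_def by (rule S_mv) (rule geo_Dseq)
    qed
    finally show ?thesis unfolding Bop_def Amv_Aa .
  qed
  finally show ?thesis .
qed

lemma Phi_ode:
  assumes i: "i \<in> {1..N}"
  shows "mv (Mh N) N (\<lambda>j. Phi a N F (Suc (Suc k)) j t) i + mv (Kh N) N (\<lambda>j. Phi a N F k j t) i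
         + mv (Lh a N) N (\<lambda>j. Phi a N F k j t) i = 0"
proof -
  have "mv (Mh N) N (\<lambda>j. Phi a N F (Suc (Suc k)) j t) i = mv (Mh N) N (\<lambda>j. - Bop a N (\<lambda>l. Phi a N F k l t) j) i"
    by (rule mv_cong) (rule Phi_SS)
  also have "\<dots> = - mv (Mh N) N (mv (Minv N) N (Amv a N (\<lambda>l. Phi a N F k l t))) i"
    unfolding mv_uminus Bop_def ..
  also have "\<dots> = - Amv a N (\<lambda>l. Phi a N F k l t) i"
    by (simp add: mv_M_Minv[OF i])
  finally show ?thesis unfolding Amv_def by simp
qed

lemma Phi_is_sol: "is_sol a N T (\<lambda>_. 0) (\<lambda>_. 0) (Phi a N F 0) (Phi a N F 1) (Phi a N F 2)"
  unfolding is_sol_def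
proof (intro conjI ballI)
  fix j t assume j: "j \<in> {1..N}"
  show "(Phi a N F 0 j has_vector_derivative Phi a N F 1 j t) (at t within {0..T})"
    using Phi_deriv_within[OF j, of a F 0 t] by simp
  show "(Phi a N F 1 j has_vector_derivative Phi a N F 2 j t) (at t within {0..T})"
    using Phi_deriv_within[OF j, of a F 1 t] by (simp add: numeral_2_eq_2)
next
  fix t i assume i: "i \<in> {1..N}"
  show "mv (Mh N) N (\<lambda>j. Phi a N F 2 j t) i + mv (Kh N) N (\<lambda>j. Phi a N F 0 j t) i + mv (Lh a N) N (\<lambda>j. Phi a N F 0 j t) i
        = (\<lambda>_. 0) t * mv (Mh N) N (\<lambda>_. 0) i"
    using Phi_ode[OF i, of a F 0 t] by (simp add: numeral_2_eq_2)
qed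

definition conv :: "(real \<Rightarrow> real) \<Rightarrow> (real \<Rightarrow> complex) \<Rightarrow> real \<Rightarrow> complex" where
  "conv g \<phi> t = integral {0..t} (\<lambda>s. g s *\<^sub>R \<phi> (t - s))"

lemma bilinear_scaleR_flip: "bilinear (\<lambda>(z::complex) (r::real). r *\<^sub>R z)"
  using bilinear_conv_bounded_bilinear bounded_bilinear.flip[OF bounded_bilinear_scaleR] by blast

lemma int_prod:
  fixes g :: "real \<Rightarrow> real" and f :: "real \<Rightarrow> complex"
  assumes g: "g absolutely_integrable_on {0..T}" and sub: "{a..b} \<subseteq> {0..T}" and f: "continuous_on {a..b} f"
  shows "(\<lambda>s. g s *\<^sub>R f s) absolutely_integrable_on {a..b}"
proof -
  have "(\<lambda>s. (\<lambda>z r. r *\<^sub>R z) (f s) (g s)) absolutely_integrable_on {a..b}"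
  proof (rule absolutely_integrable_bounded_measurable_product[OF bilinear_scaleR_flip])
    show "f \<in> borel_measurable (lebesgue_on {a..b})"
      by (rule continuous_imp_measurable_on_sets_lebesgue[OF f]) simp
    show "bounded (f ` {a..b})"
      by (rule compact_imp_bounded[OF compact_continuous_image[OF f compact_Icc]])
    show "g absolutely_integrable_on {a..b}"
      by (rule absolutely_integrable_on_subinterval[OF g sub])
  qed simp
  then show ?thesis by simp
qed

lemma int_prod':
  fixes g :: "real \<Rightarrow> real" and f :: "real \<Rightarrow> complex"
  assumes g: "g absolutely_integrable_on {0..T}" and sub: "{a..b} \<subseteq> {0..T}" and f: "continuous_on {a..b} f"
  shows "(\<lambda>s. g s *\<^sub>R f s) integrable_on {a..b}"
  using int_prod[OF assms] absolutely_integrable_on_def by blast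

lemma abs_int_sub:
  fixes g :: "real \<Rightarrow> real"
  assumes g: "g absolutely_integrable_on {0..T}" and sub: "{a..b} \<subseteq> {0..T}"
  shows "(\<lambda>s. \<bar>g s\<bar>) integrable_on {a..b}"
proof -
  have "(\<lambda>x. norm (g x)) integrable_on {a..b}"
    using absolutely_integrable_on_subinterval[OF g sub] absolutely_integrable_on_def by blast
  then show ?thesis by (simp add: real_norm_def)
qed

lemma vd_bound:
  fixes f :: "real \<Rightarrow> 'b::real_normed_vector"
  assumes d: "\<And>x. x \<in> {a..b} \<Longrightarrow> (f has_vector_derivative f' x) (at x within {a..b})"
    and B: "\<And>x. x \<in> {a..b} \<Longrightarrow> norm (f' x) \<le> B"
    and x: "x \<in> {a..b}" and y: "y \<in> {a..b}"
  shows "norm (f x - f y) \<le> B * \<bar>x - y\<bar>"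
proof -
  have "norm (f x - f y) \<le> B * norm (x - y)"
  proof (rule differentiable_bound[of "{a..b}" f "\<lambda>x h. h *\<^sub>R f' x"])
    show "(f has_derivative (\<lambda>h. h *\<^sub>R f' x)) (at x within {a..b})" if "x \<in> {a..b}" for x
      using d[OF that] unfolding has_vector_derivative_def .
    show "onorm (\<lambda>h. h *\<^sub>R f' x) \<le> B" if "x \<in> {a..b}" for x
    proof -
      have "onorm (\<lambda>h::real. h) = 1" by (rule onorm_id)
      then show ?thesis using B[OF that] onorm_scaleR_left[OF bounded_linear_ident, of "f' x"] by simp
    qed
  qed (use x y in auto)
  then show ?thesis by simp
qed

lemma taylor1:
  fixes \<phi> \<phi>1 :: "real \<Rightarrow> complex"
  assumes d1: "\<And>x. (\<phi> has_vector_derivative \<phi>1 x) (at x)"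
    and K2: "\<And>x y. x \<in> {0..T} \<Longrightarrow> y \<in> {0..T} \<Longrightarrow> norm (\<phi>1 x - \<phi>1 y) \<le> K2 * \<bar>x - y\<bar>"
    and a: "a \<in> {0..T}" and b: "b \<in> {0..T}"
  shows "norm (\<phi> b - \<phi> a - (b - a) *\<^sub>R \<phi>1 a) \<le> K2 * (b - a)^2"
proof -
  define \<psi> where "\<psi> x = \<phi> x - x *\<^sub>R \<phi>1 a" for x
  define lo where "lo = min a b"
  define hi where "hi = max a b"
  have sub: "{lo..hi} \<subseteq> {0..T}" using a b unfolding lo_def hi_def by auto
  show ?thesis
  proof (cases "a = b")
    case True
    then show ?thesis by simp
  next
    case False
  have K2pos: "K2 \<ge> 0"
  proof -
    have "0 \<le> K2 * \<bar>a - b\<bar>" using K2[OF a b] norm_ge_zero order_trans by blast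
    then show ?thesis using False by (simp add: zero_le_mult_iff)
  qed
  have "norm (\<psi> b - \<psi> a) \<le> (K2 * \<bar>b - a\<bar>) * \<bar>b - a\<bar>"
  proof (rule vd_bound[of lo hi])
    show "(\<psi> has_vector_derivative (\<phi>1 x - \<phi>1 a)) (at x within {lo..hi})" for x
    proof -
      have l: "((\<lambda>x. x *\<^sub>R \<phi>1 a) has_vector_derivative \<phi>1 a) (at x)"
        unfolding has_vector_derivative_def
        by (rule bounded_linear_imp_has_derivative) (rule bounded_linear_scaleR_left)
      show ?thesis unfolding \<psi>_def
        by (rule has_vector_derivative_at_within, rule has_vector_derivative_diff[OF d1 l])
    qed
    show "norm (\<phi>1 x - \<phi>1 a) \<le> K2 * \<bar>b - a\<bar>" if "x \<in> {lo..hi}" for x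
    proof -
      have "norm (\<phi>1 x - \<phi>1 a) \<le> K2 * \<bar>x - a\<bar>" using K2[of x a] that sub a by auto
      also have "\<dots> \<le> K2 * \<bar>b - a\<bar>"
        using that K2pos unfolding lo_def hi_def by (intro mult_left_mono) auto
      finally show ?thesis .
    qed
  qed (auto simp: lo_def hi_def)
  moreover have "\<psi> b - \<psi> a = \<phi> b - \<phi> a - (b - a) *\<^sub>R \<phi>1 a"
    unfolding \<psi>_def by (simp add: algebra_simps)
  ultimately show ?thesis by (simp add: power2_eq_square mult_ac)
  qed
qed

lemma cont_shift:
  fixes f :: "real \<Rightarrow> 'a::topological_space" and c :: real
  shows "continuous_on UNIV f \<Longrightarrow> continuous_on A (\<lambda>s. f (c - s))"
  by (rule continuous_on_compose2[of UNIV f]) (auto intro!: continuous_intros)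

context
  fixes g :: "real \<Rightarrow> real" and \<phi> \<phi>1 \<phi>2 :: "real \<Rightarrow> complex" and T K1 K2 :: real
  assumes g: "g absolutely_integrable_on {0..T}"
    and d1: "\<And>x. (\<phi> has_vector_derivative \<phi>1 x) (at x)"
    and d2: "\<And>x. (\<phi>1 has_vector_derivative \<phi>2 x) (at x)"
    and \<phi>0: "\<phi> 0 = 0"
    and K1: "\<And>x. x \<in> {0..T} \<Longrightarrow> norm (\<phi>1 x) \<le> K1"
    and K2: "\<And>x. x \<in> {0..T} \<Longrightarrow> norm (\<phi>2 x) \<le> K2"
begin

lemma c0: "continuous_on UNIV \<phi>"
  using d1 by (meson continuous_at_imp_continuous_on has_vector_derivative_continuous)
lemma c1: "continuous_on UNIV \<phi>1"
  using d2 by (meson continuous_at_imp_continuous_on has_vector_derivative_continuous)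

lemma Lip1: "x \<in> {0..T} \<Longrightarrow> y \<in> {0..T} \<Longrightarrow> norm (\<phi>1 x - \<phi>1 y) \<le> K2 * \<bar>x - y\<bar>"
  by (rule vd_bound[of 0 T]) (auto intro: has_vector_derivative_at_within d2 K2)

lemma Lip0: "x \<in> {0..T} \<Longrightarrow> norm (\<phi> x) \<le> K1 * x"
  using vd_bound[of 0 T \<phi> \<phi>1 K1 x 0] d1 K1 \<phi>0 by (auto intro: has_vector_derivative_at_within)

lemma ip:
  fixes f :: "real \<Rightarrow> complex"
  shows "{a..b} \<subseteq> {0..T} \<Longrightarrow> continuous_on {a..b} f \<Longrightarrow> (\<lambda>s. g s *\<^sub>R f s) integrable_on {a..b}"
  by (rule int_prod'[OF g])

lemma ig: "{a..b} \<subseteq> {0..T} \<Longrightarrow> (\<lambda>s. \<bar>g s\<bar>) integrable_on {a..b}"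
  by (rule abs_int_sub[OF g])

lemma ig_le: "{a..b} \<subseteq> {0..T} \<Longrightarrow> integral {a..b} (\<lambda>s. \<bar>g s\<bar>) \<le> integral {0..T} (\<lambda>s. \<bar>g s\<bar>)"
  by (rule integral_subset_le) (auto intro: ig)

lemma ig_split: "0 \<le> u \<Longrightarrow> u \<le> v \<Longrightarrow> v \<le> T \<Longrightarrow>
   integral {u..v} (\<lambda>s. \<bar>g s\<bar>) = integral {0..v} (\<lambda>s. \<bar>g s\<bar>) - integral {0..u} (\<lambda>s. \<bar>g s\<bar>)"
  using Henstock_Kurzweil_Integration.integral_combine[where a=0 and c=u and b=v and f="\<lambda>s. \<bar>g s\<bar>"] ig[of 0 v] by auto

lemma bound_int:
  fixes f :: "real \<Rightarrow> complex"
  assumes sub: "{a..b} \<subseteq> {0..T}" and c: "continuous_on {a..b} f" and C: "C \<ge> 0"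
    and b: "\<And>s. s \<in> {a..b} \<Longrightarrow> norm (f s) \<le> C"
  shows "norm (integral {a..b} (\<lambda>s. g s *\<^sub>R f s)) \<le> C * integral {a..b} (\<lambda>s. \<bar>g s\<bar>)"
proof -
  have "norm (integral {a..b} (\<lambda>s. g s *\<^sub>R f s)) \<le> integral {a..b} (\<lambda>s. C * \<bar>g s\<bar>)"
  proof (rule integral_norm_bound_integral)
    show "(\<lambda>s. g s *\<^sub>R f s) integrable_on {a..b}" by (rule ip[OF sub c])
    show "(\<lambda>s. C * \<bar>g s\<bar>) integrable_on {a..b}" by (rule integrable_on_mult_right[OF ig[OF sub]])
    show "norm (g s *\<^sub>R f s) \<le> C * \<bar>g s\<bar>" if "s \<in> {a..b}" for s
      using mult_left_mono[OF b[OF that], of "\<bar>g s\<bar>"] by (simp add: mult.commute)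
  qed
  also have "\<dots> = C * integral {a..b} (\<lambda>s. \<bar>g s\<bar>)"
    by (rule integral_mult[symmetric, OF ig[OF sub]])
  finally show ?thesis .
qed


lemma K2_nonneg: "0 \<le> T \<Longrightarrow> K2 \<ge> 0"
proof -
  assume "0 \<le> T"
  then have "norm (\<phi>2 0) \<le> K2" using K2[of 0] by simp
  then show ?thesis using norm_ge_zero[of "\<phi>2 0"] by linarith
qed
lemma K1_nonneg: "0 \<le> T \<Longrightarrow> K1 \<ge> 0"
proof -
  assume "0 \<le> T"
  then have "norm (\<phi>1 0) \<le> K1" using K1[of 0] by simp
  then show ?thesis using norm_ge_zero[of "\<phi>1 0"] by linarith
qed

lemma cs0: "continuous_on A (\<lambda>s. \<phi> (c - s))" by (rule cont_shift[OF c0])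
lemma cs1: "continuous_on A (\<lambda>s. \<phi>1 (c - s))" by (rule cont_shift[OF c1])

lemma split_conv:
  fixes f :: "real \<Rightarrow> complex"
  assumes "0 \<le> u" "u \<le> v" "v \<le> T" and c: "continuous_on UNIV f"
  shows "integral {0..v} (\<lambda>s. g s *\<^sub>R f (v - s)) = integral {0..u} (\<lambda>s. g s *\<^sub>R f (v - s)) + integral {u..v} (\<lambda>s. g s *\<^sub>R f (v - s))"
proof -
  have "(\<lambda>s. g s *\<^sub>R f (v - s)) integrable_on {0..v}"
    by (rule ip) (use assms in \<open>auto intro: cont_shift[OF c]\<close>)
  then show ?thesis
    using Henstock_Kurzweil_Integration.integral_combine[where a=0 and c=u and b=v and f="\<lambda>s. g s *\<^sub>R f (v - s)"] assms by simp
qed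

lemma conv_A:
  assumes u: "0 \<le> u" "u \<le> v" "v \<le> T"
  shows "norm (conv g \<phi> v - conv g \<phi> u - (v - u) *\<^sub>R conv g \<phi>1 u)
     \<le> (v - u) * (K2 * (v - u) * integral {0..T} (\<lambda>s. \<bar>g s\<bar>) + K1 * integral {u..v} (\<lambda>s. \<bar>g s\<bar>))"
proof -
  have T0: "0 \<le> T" using u by simp
  have sub: "{0..u} \<subseteq> {0..T}" "{u..v} \<subseteq> {0..T}" using u by auto
  define A0 where "A0 = integral {0..u} (\<lambda>s. g s *\<^sub>R \<phi> (v - s))"
  define I2 where "I2 = integral {u..v} (\<lambda>s. g s *\<^sub>R \<phi> (v - s))"
  define I1 where "I1 = integral {0..u} (\<lambda>s. g s *\<^sub>R (\<phi> (v - s) - \<phi> (u - s) - (v - u) *\<^sub>R \<phi>1 (u - s)))"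
  have sp: "conv g \<phi> v = A0 + I2" unfolding conv_def A0_def I2_def by (rule split_conv[OF u c0])
  have I1eq: "I1 = A0 - conv g \<phi> u - (v - u) *\<^sub>R conv g \<phi>1 u"
  proof -
    have e: "g s *\<^sub>R (\<phi> (v - s) - \<phi> (u - s) - (v - u) *\<^sub>R \<phi>1 (u - s)) =
          (g s *\<^sub>R \<phi> (v - s) - g s *\<^sub>R \<phi> (u - s)) - (v - u) *\<^sub>R (g s *\<^sub>R \<phi>1 (u - s))" for s
      by (simp add: algebra_simps)
    have i1: "(\<lambda>s. g s *\<^sub>R \<phi> (v - s)) integrable_on {0..u}" by (rule ip[OF sub(1) cs0])
    have i2: "(\<lambda>s. g s *\<^sub>R \<phi> (u - s)) integrable_on {0..u}" by (rule ip[OF sub(1) cs0])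
    have i3: "(\<lambda>s. g s *\<^sub>R \<phi>1 (u - s)) integrable_on {0..u}" by (rule ip[OF sub(1) cs1])
    have "I1 = integral {0..u} (\<lambda>s. g s *\<^sub>R \<phi> (v - s) - g s *\<^sub>R \<phi> (u - s)) - integral {0..u} (\<lambda>s. (v - u) *\<^sub>R (g s *\<^sub>R \<phi>1 (u - s)))"
      unfolding I1_def e by (rule integral_diff) (intro integrable_diff integrable_cmul i1 i2 i3)+
    also have "\<dots> = A0 - conv g \<phi> u - (v - u) *\<^sub>R conv g \<phi>1 u"
      unfolding A0_def conv_def integral_cmul integral_diff[OF i1 i2] ..
    finally show ?thesis .
  qed
  have lhs: "conv g \<phi> v - conv g \<phi> u - (v - u) *\<^sub>R conv g \<phi>1 u = I1 + I2"
    using sp I1eq by (simp add: algebra_simps)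
  have b1: "norm I1 \<le> K2 * (v - u)^2 * integral {0..u} (\<lambda>s. \<bar>g s\<bar>)"
    unfolding I1_def
  proof (rule bound_int[OF sub(1)])
    show "continuous_on {0..u} (\<lambda>s. \<phi> (v - s) - \<phi> (u - s) - (v - u) *\<^sub>R \<phi>1 (u - s))"
      by (intro continuous_intros cs0 cs1)
    show "0 \<le> K2 * (v - u)\<^sup>2" using K2_nonneg[OF T0] by simp
    fix s assume s: "s \<in> {0..u}"
    have "norm (\<phi> (v - s) - \<phi> (u - s) - ((v - s) - (u - s)) *\<^sub>R \<phi>1 (u - s)) \<le> K2 * ((v - s) - (u - s))^2"
      by (rule taylor1[OF d1 Lip1]) (use s u in auto)
    then show "norm (\<phi> (v - s) - \<phi> (u - s) - (v - u) *\<^sub>R \<phi>1 (u - s)) \<le> K2 * (v - u)\<^sup>2" by simp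
  qed
  have b1': "norm I1 \<le> K2 * (v - u)^2 * integral {0..T} (\<lambda>s. \<bar>g s\<bar>)"
    using b1 mult_left_mono[OF ig_le[OF sub(1)], of "K2 * (v - u)^2"] K2_nonneg[OF T0] by simp
  have b2: "norm I2 \<le> K1 * (v - u) * integral {u..v} (\<lambda>s. \<bar>g s\<bar>)"
    unfolding I2_def
  proof (rule bound_int[OF sub(2) cs0])
    show "0 \<le> K1 * (v - u)" using K1_nonneg[OF T0] u by simp
    fix s assume s: "s \<in> {u..v}"
    have "norm (\<phi> (v - s)) \<le> K1 * (v - s)" by (rule Lip0) (use s u in auto)
    also have "\<dots> \<le> K1 * (v - u)" using s K1_nonneg[OF T0] by (intro mult_left_mono) auto
    finally show "norm (\<phi> (v - s)) \<le> K1 * (v - u)" .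
  qed
  have "norm (I1 + I2) \<le> norm I1 + norm I2" by (rule norm_triangle_ineq)
  also have "\<dots> \<le> K2 * (v - u)^2 * integral {0..T} (\<lambda>s. \<bar>g s\<bar>) + K1 * (v - u) * integral {u..v} (\<lambda>s. \<bar>g s\<bar>)"
    using b1' b2 by linarith
  also have "\<dots> = (v - u) * (K2 * (v - u) * integral {0..T} (\<lambda>s. \<bar>g s\<bar>) + K1 * integral {u..v} (\<lambda>s. \<bar>g s\<bar>))"
    by (simp add: power2_eq_square algebra_simps)
  finally show ?thesis unfolding lhs .
qed

lemma conv_B:
  assumes u: "0 \<le> u" "u \<le> v" "v \<le> T"
  shows "norm (conv g \<phi> u - conv g \<phi> v - (u - v) *\<^sub>R conv g \<phi>1 v)
     \<le> (v - u) * (K2 * (v - u) * integral {0..T} (\<lambda>s. \<bar>g s\<bar>) + 2 * K1 * integral {u..v} (\<lambda>s. \<bar>g s\<bar>))"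
proof -
  have T0: "0 \<le> T" using u by simp
  have sub: "{0..u} \<subseteq> {0..T}" "{u..v} \<subseteq> {0..T}" using u by auto
  define A0 where "A0 = integral {0..u} (\<lambda>s. g s *\<^sub>R \<phi> (v - s))"
  define A1 where "A1 = integral {u..v} (\<lambda>s. g s *\<^sub>R \<phi> (v - s))"
  define B0 where "B0 = integral {0..u} (\<lambda>s. g s *\<^sub>R \<phi>1 (v - s))"
  define B1 where "B1 = integral {u..v} (\<lambda>s. g s *\<^sub>R \<phi>1 (v - s))"
  define J1 where "J1 = integral {0..u} (\<lambda>s. g s *\<^sub>R (\<phi> (v - s) - \<phi> (u - s) - (v - u) *\<^sub>R \<phi>1 (v - s)))"
  define J2 where "J2 = integral {u..v} (\<lambda>s. g s *\<^sub>R (\<phi> (v - s) - (v - u) *\<^sub>R \<phi>1 (v - s)))"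
  have sp0: "conv g \<phi> v = A0 + A1" unfolding conv_def A0_def A1_def by (rule split_conv[OF u c0])
  have sp1: "conv g \<phi>1 v = B0 + B1" unfolding conv_def B0_def B1_def by (rule split_conv[OF u c1])
  have J1eq: "J1 = A0 - conv g \<phi> u - (v - u) *\<^sub>R B0"
  proof -
    have e: "g s *\<^sub>R (\<phi> (v - s) - \<phi> (u - s) - (v - u) *\<^sub>R \<phi>1 (v - s)) =
          (g s *\<^sub>R \<phi> (v - s) - g s *\<^sub>R \<phi> (u - s)) - (v - u) *\<^sub>R (g s *\<^sub>R \<phi>1 (v - s))" for s
      by (simp add: algebra_simps)
    have i1: "(\<lambda>s. g s *\<^sub>R \<phi> (v - s)) integrable_on {0..u}" by (rule ip[OF sub(1) cs0])
    have i2: "(\<lambda>s. g s *\<^sub>R \<phi> (u - s)) integrable_on {0..u}" by (rule ip[OF sub(1) cs0])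
    have i3: "(\<lambda>s. g s *\<^sub>R \<phi>1 (v - s)) integrable_on {0..u}" by (rule ip[OF sub(1) cs1])
    have "J1 = integral {0..u} (\<lambda>s. g s *\<^sub>R \<phi> (v - s) - g s *\<^sub>R \<phi> (u - s)) - integral {0..u} (\<lambda>s. (v - u) *\<^sub>R (g s *\<^sub>R \<phi>1 (v - s)))"
      unfolding J1_def e by (rule integral_diff) (intro integrable_diff integrable_cmul i1 i2 i3)+
    also have "\<dots> = A0 - conv g \<phi> u - (v - u) *\<^sub>R B0"
      unfolding A0_def B0_def conv_def integral_cmul integral_diff[OF i1 i2] ..
    finally show ?thesis .
  qed
  have J2eq: "J2 = A1 - (v - u) *\<^sub>R B1"
  proof -
    have e: "g s *\<^sub>R (\<phi> (v - s) - (v - u) *\<^sub>R \<phi>1 (v - s)) = g s *\<^sub>R \<phi> (v - s) - (v - u) *\<^sub>R (g s *\<^sub>R \<phi>1 (v - s))" for s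
      by (simp add: algebra_simps)
    have i1: "(\<lambda>s. g s *\<^sub>R \<phi> (v - s)) integrable_on {u..v}" by (rule ip[OF sub(2) cs0])
    have i3: "(\<lambda>s. g s *\<^sub>R \<phi>1 (v - s)) integrable_on {u..v}" by (rule ip[OF sub(2) cs1])
    show ?thesis unfolding J2_def e integral_diff[OF i1 integrable_cmul[OF i3]] integral_cmul A1_def B1_def ..
  qed
  have lhs: "conv g \<phi> u - conv g \<phi> v - (u - v) *\<^sub>R conv g \<phi>1 v = - (J1 + J2)"
    unfolding sp0 sp1 J1eq J2eq by (simp add: algebra_simps)
  have b1: "norm J1 \<le> K2 * (v - u)^2 * integral {0..u} (\<lambda>s. \<bar>g s\<bar>)"
    unfolding J1_def
  proof (rule bound_int[OF sub(1)])
    show "continuous_on {0..u} (\<lambda>s. \<phi> (v - s) - \<phi> (u - s) - (v - u) *\<^sub>R \<phi>1 (v - s))"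
      by (intro continuous_intros cs0 cs1)
    show "0 \<le> K2 * (v - u)\<^sup>2" using K2_nonneg[OF T0] by simp
    fix s assume s: "s \<in> {0..u}"
    have "norm (\<phi> (u - s) - \<phi> (v - s) - ((u - s) - (v - s)) *\<^sub>R \<phi>1 (v - s)) \<le> K2 * ((u - s) - (v - s))^2"
      by (rule taylor1[OF d1 Lip1]) (use s u in auto)
    moreover have "\<phi> (u - s) - \<phi> (v - s) - ((u - s) - (v - s)) *\<^sub>R \<phi>1 (v - s) = - (\<phi> (v - s) - \<phi> (u - s) - (v - u) *\<^sub>R \<phi>1 (v - s))"
      by (simp add: algebra_simps)
    moreover have "((u - s) - (v - s))^2 = (v - u)^2" by (simp add: power2_eq_square algebra_simps)
    ultimately show "norm (\<phi> (v - s) - \<phi> (u - s) - (v - u) *\<^sub>R \<phi>1 (v - s)) \<le> K2 * (v - u)\<^sup>2"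
      by (metis norm_minus_cancel)
  qed
  have b1': "norm J1 \<le> K2 * (v - u)^2 * integral {0..T} (\<lambda>s. \<bar>g s\<bar>)"
    using b1 mult_left_mono[OF ig_le[OF sub(1)], of "K2 * (v - u)^2"] K2_nonneg[OF T0] by simp
  have b2: "norm J2 \<le> 2 * K1 * (v - u) * integral {u..v} (\<lambda>s. \<bar>g s\<bar>)"
    unfolding J2_def
  proof (rule bound_int[OF sub(2)])
    show "continuous_on {u..v} (\<lambda>s. \<phi> (v - s) - (v - u) *\<^sub>R \<phi>1 (v - s))"
      by (intro continuous_intros cs0 cs1)
    show "0 \<le> 2 * K1 * (v - u)" using K1_nonneg[OF T0] u by simp
    fix s assume s: "s \<in> {u..v}"
    have "norm (\<phi> (v - s) - (v - u) *\<^sub>R \<phi>1 (v - s)) \<le> norm (\<phi> (v - s)) + norm ((v - u) *\<^sub>R \<phi>1 (v - s))"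
      by (rule norm_triangle_ineq4)
    also have "norm (\<phi> (v - s)) \<le> K1 * (v - u)"
    proof -
      have "norm (\<phi> (v - s)) \<le> K1 * (v - s)" by (rule Lip0) (use s u in auto)
      also have "\<dots> \<le> K1 * (v - u)" using s K1_nonneg[OF T0] by (intro mult_left_mono) auto
      finally show ?thesis .
    qed
    also have "norm ((v - u) *\<^sub>R \<phi>1 (v - s)) \<le> (v - u) * K1"
      using K1[of "v - s"] s u by (auto intro!: mult_left_mono)
    finally show "norm (\<phi> (v - s) - (v - u) *\<^sub>R \<phi>1 (v - s)) \<le> 2 * K1 * (v - u)" by simp
  qed
  have "norm (- (J1 + J2)) \<le> norm J1 + norm J2" unfolding norm_minus_cancel by (rule norm_triangle_ineq)
  also have "\<dots> \<le> K2 * (v - u)^2 * integral {0..T} (\<lambda>s. \<bar>g s\<bar>) + 2 * K1 * (v - u) * integral {u..v} (\<lambda>s. \<bar>g s\<bar>)"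
    using b1' b2 by linarith
  also have "\<dots> = (v - u) * (K2 * (v - u) * integral {0..T} (\<lambda>s. \<bar>g s\<bar>) + 2 * K1 * integral {u..v} (\<lambda>s. \<bar>g s\<bar>))"
    by (simp add: power2_eq_square algebra_simps)
  finally show ?thesis unfolding lhs .
qed


lemma conv_deriv:
  assumes t: "t \<in> {0..T}"
  shows "(conv g \<phi> has_vector_derivative conv g \<phi>1 t) (at t within {0..T})"
proof -
  have T0: "0 \<le> T" using t by simp
  define G1 where "G1 = integral {0..T} (\<lambda>s. \<bar>g s\<bar>)"
  define Ig where "Ig x = integral {0..x} (\<lambda>s. \<bar>g s\<bar>)" for x
  have G1: "G1 \<ge> 0" unfolding G1_def by (rule integral_nonneg[OF ig]) auto
  have k1: "K1 \<ge> 0" by (rule K1_nonneg[OF T0])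
  have k2: "K2 \<ge> 0" by (rule K2_nonneg[OF T0])
  have cIg: "continuous_on {0..T} Ig"
    unfolding Ig_def by (rule indefinite_integral_continuous_1[OF ig]) simp
  show ?thesis
    unfolding has_vector_derivative_def has_derivative_within_alt
  proof (intro conjI allI impI)
    show "bounded_linear (\<lambda>x. x *\<^sub>R conv g \<phi>1 t)" by (rule bounded_linear_scaleR_left)
    fix e :: real assume e: "e > 0"
    define e' where "e' = e / (2 * (2 * K1 + 1))"
    have e': "e' > 0" unfolding e'_def using e k1 by simp
    obtain d1 where d1: "d1 > 0" and d1b: "\<And>y. y \<in> {0..T} \<Longrightarrow> dist y t < d1 \<Longrightarrow> dist (Ig y) (Ig t) < e'"
      using cIg t e' unfolding continuous_on_iff by metis
    define d2 where "d2 = e / (2 * (K2 * G1 + 1))"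
    have "K2 * G1 \<ge> 0" using k2 G1 by simp
    then have d2: "d2 > 0" unfolding d2_def using e by (intro divide_pos_pos) auto
    have hK1: "2 * K1 * x \<le> e / 2" if "0 \<le> x" "x < e'" for x
    proof -
      have "2 * K1 * x \<le> (2 * K1 + 1) * e'" using that k1 by (intro mult_mono) auto
      also have "\<dots> = e / 2" unfolding e'_def using k1 by (simp add: field_simps)
      finally show ?thesis .
    qed
    have hK2: "K2 * x * G1 \<le> e / 2" if "0 \<le> x" "x < d2" for x
    proof -
      have "K2 * x * G1 = (K2 * G1) * x" by simp
      also have "\<dots> \<le> (K2 * G1 + 1) * d2" using that k2 G1 by (intro mult_mono) auto
      also have "\<dots> = e / 2"
      proof -
        have "K2 * G1 \<ge> 0" using k2 G1 by simp
        then have "K2 * G1 + 1 \<noteq> 0" by linarith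
        then show ?thesis unfolding d2_def by (simp add: field_simps)
      qed
      finally show ?thesis .
    qed
    show "\<exists>d>0. \<forall>y\<in>{0..T}. norm (y - t) < d \<longrightarrow>
            norm (conv g \<phi> y - conv g \<phi> t - (y - t) *\<^sub>R conv g \<phi>1 t) \<le> e * norm (y - t)"
    proof (intro exI[of _ "min d1 d2"] conjI ballI impI)
      show "min d1 d2 > 0" using d1 d2 by simp
      fix y assume y: "y \<in> {0..T}" and yd: "norm (y - t) < min d1 d2"
      have dI: "\<bar>Ig y - Ig t\<bar> < e'" using d1b[OF y] yd by (simp add: dist_real_def dist_norm)
      show "norm (conv g \<phi> y - conv g \<phi> t - (y - t) *\<^sub>R conv g \<phi>1 t) \<le> e * norm (y - t)"
      proof (cases "t \<le> y")
        case True
        have I: "integral {t..y} (\<lambda>s. \<bar>g s\<bar>) = Ig y - Ig t"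
          unfolding Ig_def by (rule ig_split) (use t y True in auto)
        have I0: "Ig y - Ig t \<ge> 0" unfolding I[symmetric] by (rule integral_nonneg[OF ig]) (use t y True in auto)
        have "norm (conv g \<phi> y - conv g \<phi> t - (y - t) *\<^sub>R conv g \<phi>1 t)
            \<le> (y - t) * (K2 * (y - t) * G1 + K1 * (Ig y - Ig t))"
          using conv_A[of t y] t y True unfolding I G1_def by simp
        also have "\<dots> \<le> (y - t) * e"
        proof (rule mult_left_mono)
          have "K2 * (y - t) * G1 \<le> e / 2" using hK2[of "y - t"] True yd by simp
          moreover have "2 * K1 * (Ig y - Ig t) \<le> e / 2" using hK1[of "Ig y - Ig t"] I0 dI by simp
          moreover have "K1 * (Ig y - Ig t) \<ge> 0" using k1 I0 by simp
          ultimately show "K2 * (y - t) * G1 + K1 * (Ig y - Ig t) \<le> e" by linarith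
        qed (use True in simp)
        finally show ?thesis using True by (simp add: mult.commute)
      next
        case False
        have I: "integral {y..t} (\<lambda>s. \<bar>g s\<bar>) = Ig t - Ig y"
          unfolding Ig_def by (rule ig_split) (use t y False in auto)
        have I0: "Ig t - Ig y \<ge> 0" unfolding I[symmetric] by (rule integral_nonneg[OF ig]) (use t y False in auto)
        have "norm (conv g \<phi> y - conv g \<phi> t - (y - t) *\<^sub>R conv g \<phi>1 t)
            \<le> (t - y) * (K2 * (t - y) * G1 + 2 * K1 * (Ig t - Ig y))"
          using conv_B[of y t] t y False unfolding I G1_def by simp
        also have "\<dots> \<le> (t - y) * e"
        proof (rule mult_left_mono)
          have "K2 * (t - y) * G1 \<le> e / 2" using hK2[of "t - y"] False yd by simp
          moreover have "2 * K1 * (Ig t - Ig y) \<le> e / 2" using hK1[of "Ig t - Ig y"] I0 dI by simp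
          ultimately show "K2 * (t - y) * G1 + 2 * K1 * (Ig t - Ig y) \<le> e" by linarith
        qed (use False in simp)
        finally show ?thesis using False by (simp add: mult.commute)
      qed
    qed
  qed
qed

end


lemma conv_deriv':
  fixes \<phi> \<phi>1 \<phi>2 :: "real \<Rightarrow> complex"
  assumes g: "g absolutely_integrable_on {0..T}"
    and d1: "\<And>x. (\<phi> has_vector_derivative \<phi>1 x) (at x)"
    and d2: "\<And>x. (\<phi>1 has_vector_derivative \<phi>2 x) (at x)"
    and c2: "continuous_on UNIV \<phi>2" and \<phi>0: "\<phi> 0 = 0" and t: "t \<in> {0..T}"
  shows "(conv g \<phi> has_vector_derivative conv g \<phi>1 t) (at t within {0..T})"
proof -
  have c1: "continuous_on UNIV \<phi>1"
    using d2 by (meson continuous_at_imp_continuous_on has_vector_derivative_continuous)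
  have "bounded (\<phi>1 ` {0..T})"
    by (rule compact_imp_bounded[OF compact_continuous_image[OF continuous_on_subset[OF c1] compact_Icc]]) simp
  then obtain K1 where K1: "\<And>x. x \<in> {0..T} \<Longrightarrow> norm (\<phi>1 x) \<le> K1"
    unfolding bounded_iff by blast
  have "bounded (\<phi>2 ` {0..T})"
    by (rule compact_imp_bounded[OF compact_continuous_image[OF continuous_on_subset[OF c2] compact_Icc]]) simp
  then obtain K2 where K2: "\<And>x. x \<in> {0..T} \<Longrightarrow> norm (\<phi>2 x) \<le> K2"
    unfolding bounded_iff by blast
  show ?thesis by (rule conv_deriv[OF g d1 d2 \<phi>0 K1 K2 t])
qed

definition sq :: "complex \<Rightarrow> real" where "sq z = (Re z)^2 + (Im z)^2"

lemma sq_nonneg: "sq z \<ge> 0" unfolding sq_def by simp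
lemma sq_cmod: "sq z = (cmod z)^2" unfolding sq_def cmod_power2 ..
lemma sq_zero: "sq z = 0 \<longleftrightarrow> z = 0" unfolding sq_def by (simp add: complex_eq_iff add_nonneg_eq_0_iff)


lemma sq_deriv:
  assumes "(f has_vector_derivative f') (at t within U)"
  shows "((\<lambda>t. sq (f t)) has_real_derivative (2 * Re (f t) * Re f' + 2 * Im (f t) * Im f')) (at t within U)"
proof -
  have r: "((\<lambda>t. Re (f t)) has_real_derivative Re f') (at t within U)" by (rule has_field_derivative_Re[OF assms])
  have i: "((\<lambda>t. Im (f t)) has_real_derivative Im f') (at t within U)" by (rule has_field_derivative_Im[OF assms])
  have "((\<lambda>t. Re (f t) * Re (f t) + Im (f t) * Im (f t)) has_real_derivative
          (Re (f t) * Re f' + Re f' * Re (f t) + (Im (f t) * Im f' + Im f' * Im (f t)))) (at t within U)"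
    by (intro DERIV_add DERIV_mult' r i)
  then show ?thesis unfolding sq_def power2_eq_square by (simp add: algebra_simps)
qed

lemma two_mult_le: "2 * (x::real) * y \<le> x^2 + y^2"
  using sum_squares_bound[of x y] by simp

lemma uniq:
  fixes Y Y1 Y2 :: "nat \<Rightarrow> real \<Rightarrow> complex"
  assumes T: "0 \<le> T"
    and dY: "\<And>j t. j \<in> {1..N} \<Longrightarrow> t \<in> {0..T} \<Longrightarrow> (Y j has_vector_derivative Y1 j t) (at t within {0..T})"
    and dY1: "\<And>j t. j \<in> {1..N} \<Longrightarrow> t \<in> {0..T} \<Longrightarrow> (Y1 j has_vector_derivative Y2 j t) (at t within {0..T})"
    and ode: "\<And>t i. t \<in> {0..T} \<Longrightarrow> i \<in> {1..N} \<Longrightarrow>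
        mv (Mh N) N (\<lambda>j. Y2 j t) i + mv (Kh N) N (\<lambda>j. Y j t) i + mv (Lh a N) N (\<lambda>j. Y j t) i = 0"
    and i0: "\<And>j. j \<in> {1..N} \<Longrightarrow> Y j 0 = 0" and i1: "\<And>j. j \<in> {1..N} \<Longrightarrow> Y1 j 0 = 0"
    and t: "t \<in> {0..T}" and j: "j \<in> {1..N}"
  shows "Y j t = 0 \<and> Y1 j t = 0"
proof -
  have Y2eq: "Y2 j t = - Bop a N (\<lambda>k. Y k t) j" if t: "t \<in> {0..T}" and j: "j \<in> {1..N}" for j t
  proof -
    have "Y2 j t = mv (Minv N) N (mv (Mh N) N (\<lambda>k. Y2 k t)) j" by (rule mv_Minv_M[OF j, symmetric])
    also have "\<dots> = mv (Minv N) N (\<lambda>i. - Amv a N (\<lambda>k. Y k t) i) j"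
    proof (rule mv_cong)
      fix i assume i: "i \<in> {1..N}"
      have h: "mv (Mh N) N (\<lambda>j. Y2 j t) i + (mv (Kh N) N (\<lambda>j. Y j t) i + mv (Lh a N) N (\<lambda>j. Y j t) i) = 0"
        using ode[OF t i] by (simp add: add.assoc)
      show "mv (Mh N) N (\<lambda>k. Y2 k t) i = - Amv a N (\<lambda>k. Y k t) i"
        unfolding Amv_def eq_neg_iff_add_eq_0 by (rule h)
    qed
    also have "\<dots> = - Bop a N (\<lambda>k. Y k t) j" unfolding mv_uminus Bop_def ..
    finally show ?thesis .
  qed
  define e where "e t = (\<Sum>j=1..N. sq (Y j t) + sq (Y1 j t))" for t
  define e' where "e' t = (\<Sum>j=1..N. (2 * Re (Y j t) * Re (Y1 j t) + 2 * Im (Y j t) * Im (Y1 j t))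
        + (2 * Re (Y1 j t) * Re (Y2 j t) + 2 * Im (Y1 j t) * Im (Y2 j t)))" for t
  have de: "(e has_real_derivative e' t) (at t within {0..T})" if t: "t \<in> {0..T}" for t
    unfolding e_def e'_def
    by (intro DERIV_sum DERIV_add sq_deriv dY dY1 t) auto
  define C where "C = 2 + real N * real N * (cB a N)^2"
  have e0: "e t \<ge> 0" for t unfolding e_def by (intro sum_nonneg add_nonneg_nonneg sq_nonneg)
  have ebound: "e' t \<le> C * e t" if t: "t \<in> {0..T}" for t
  proof -
    have tm: "(2 * Re (Y j t) * Re (Y1 j t) + 2 * Im (Y j t) * Im (Y1 j t))
        + (2 * Re (Y1 j t) * Re (Y2 j t) + 2 * Im (Y1 j t) * Im (Y2 j t))
        \<le> sq (Y j t) + 2 * sq (Y1 j t) + sq (Y2 j t)" for j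
      unfolding sq_def using two_mult_le[of "Re (Y j t)" "Re (Y1 j t)"] two_mult_le[of "Im (Y j t)" "Im (Y1 j t)"]
        two_mult_le[of "Re (Y1 j t)" "Re (Y2 j t)"] two_mult_le[of "Im (Y1 j t)" "Im (Y2 j t)"]
      by (smt (verit))
    have nY: "(nrm N (\<lambda>k. Y k t))^2 \<le> real N * (\<Sum>k=1..N. sq (Y k t))"
    proof -
      have "(nrm N (\<lambda>k. Y k t))^2 \<le> (\<Sum>k=1..N. (cmod (Y k t))^2) * card {1..N}"
        unfolding nrm_def by (rule sum_squared_le_sum_of_squares)
      then show ?thesis by (simp add: sq_cmod mult.commute)
    qed
    have s2: "sq (Y2 j t) \<le> (cB a N)^2 * (nrm N (\<lambda>k. Y k t))^2" if j: "j \<in> {1..N}" for j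
    proof -
      have "cmod (Y2 j t) \<le> cB a N * nrm N (\<lambda>k. Y k t)"
        using Bop_bound[OF j, of a "\<lambda>k. Y k t"] Y2eq[OF t j] by simp
      then have "(cmod (Y2 j t))^2 \<le> (cB a N * nrm N (\<lambda>k. Y k t))^2"
        by (rule power_mono) simp
      then show ?thesis by (simp add: sq_cmod power_mult_distrib)
    qed
    have "e' t \<le> (\<Sum>j=1..N. sq (Y j t) + 2 * sq (Y1 j t) + sq (Y2 j t))"
      unfolding e'_def by (rule sum_mono) (rule tm)
    also have "\<dots> \<le> (\<Sum>j=1..N. sq (Y j t) + 2 * sq (Y1 j t) + (cB a N)^2 * (nrm N (\<lambda>k. Y k t))^2)"
      by (rule sum_mono) (use s2 in auto)
    also have "\<dots> = (\<Sum>j=1..N. sq (Y j t)) + 2 * (\<Sum>j=1..N. sq (Y1 j t)) + real N * ((cB a N)^2 * (nrm N (\<lambda>k. Y k t))^2)"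
      by (simp add: sum.distrib sum_distrib_left)
    also have "\<dots> \<le> (\<Sum>j=1..N. sq (Y j t)) + 2 * (\<Sum>j=1..N. sq (Y1 j t)) + real N * ((cB a N)^2 * (real N * (\<Sum>k=1..N. sq (Y k t))))"
      by (intro add_left_mono mult_left_mono nY) auto
    also have "\<dots> \<le> C * e t"
    proof -
      define A where "A = (\<Sum>j=1..N. sq (Y j t))"
      define B where "B = (\<Sum>j=1..N. sq (Y1 j t))"
      have a1: "A \<ge> 0" "B \<ge> 0" unfolding A_def B_def by (intro sum_nonneg sq_nonneg)+
      have ee: "e t = A + B" unfolding e_def A_def B_def by (simp add: sum.distrib)
      have m: "real N * real N * (cB a N)^2 * B \<ge> 0" using a1 by simp
      have "A + 2 * B + real N * ((cB a N)^2 * (real N * A)) = C * (A + B) - A - real N * real N * (cB a N)^2 * B"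
        unfolding C_def by (simp add: algebra_simps)
      also have "\<dots> \<le> C * (A + B)" using a1 m by linarith
      finally show ?thesis unfolding ee A_def B_def .
    qed
    finally show ?thesis .
  qed
  define f where "f t = exp (- C * t) * e t" for t
  have cont_e: "continuous_on {0..T} e"
    using de by (meson DERIV_continuous continuous_on_eq_continuous_within)
  have cont_f: "continuous_on {0..T} f" unfolding f_def by (intro continuous_intros cont_e)
  have "f 0 \<ge> f t"
  proof (rule DERIV_nonpos_imp_decreasing_open[of 0 t f])
    show "0 \<le> t" using t by simp
    show "continuous_on {0..t} f" by (rule continuous_on_subset[OF cont_f]) (use t in auto)
    fix x assume x: "0 < x" "x < t"
    have xT: "x \<in> {0..T}" using x t by auto
    have dex: "(e has_real_derivative e' x) (at x)"
      using de[OF xT] at_within_Icc_at[of 0 x T] x t by simp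
    have "((\<lambda>x. - C * x) has_real_derivative (- C * 1)) (at x)" by (rule DERIV_cmult[OF DERIV_ident])
    then have dexp: "((\<lambda>x. exp (- C * x)) has_real_derivative (exp (- C * x) * (- C * 1))) (at x)"
      by (rule DERIV_fun_exp)
    have "(f has_real_derivative (exp (- C * x) * e' x + exp (- C * x) * (- C * 1) * e x)) (at x)"
      unfolding f_def by (rule DERIV_mult'[OF dexp dex])
    moreover have "exp (- C * x) * e' x + exp (- C * x) * (- C * 1) * e x \<le> 0"
    proof -
      have "exp (- C * x) * e' x \<le> exp (- C * x) * (C * e x)"
        by (rule mult_left_mono[OF ebound[OF xT]]) simp
      then show ?thesis by (simp add: algebra_simps)
    qed
    ultimately show "\<exists>y. (f has_real_derivative y) (at x) \<and> y \<le> 0" by blast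
  qed
  moreover have "f 0 = 0" unfolding f_def e_def using i0 i1 by (simp add: sq_def)
  ultimately have "f t \<le> 0" by simp
  then have "e t \<le> 0" unfolding f_def by (simp add: mult_le_0_iff)
  then have "e t = 0" using e0[of t] by simp
  then have "\<forall>k\<in>{1..N}. sq (Y k t) + sq (Y1 k t) = 0"
    unfolding e_def by (subst (asm) sum_nonneg_eq_0_iff) (auto intro: add_nonneg_nonneg sq_nonneg)
  then have "sq (Y j t) + sq (Y1 j t) = 0" using j by blast
  then show ?thesis using sq_nonneg[of "Y j t"] sq_nonneg[of "Y1 j t"] sq_zero by (metis add_nonneg_eq_0_iff)
qed

lemma hi_mv:
  assumes "\<And>j. j \<in> {1..N} \<Longrightarrow> (f j has_integral I j) X"
  shows "((\<lambda>x. mv A N (\<lambda>j. f j x) i) has_integral mv A N I i) X"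
  unfolding mv_def by (intro has_integral_sum has_integral_mult_right assms) auto

lemma mv_scaleR: "mv A N (\<lambda>j. r *\<^sub>R x j) i = r *\<^sub>R mv A N x i"
  unfolding mv_def by (simp add: scaleR_sum_right)

lemma conv_mv:
  assumes "\<And>j. j \<in> {1..N} \<Longrightarrow> (\<lambda>s. g s *\<^sub>R f j (\<tau> - s)) integrable_on {0..\<tau>}"
  shows "conv g (\<lambda>x. mv A N (\<lambda>j. f j x) i) \<tau> = mv A N (\<lambda>j. conv g (f j) \<tau>) i"
proof -
  have "conv g (\<lambda>x. mv A N (\<lambda>j. f j x) i) \<tau> = integral {0..\<tau>} (\<lambda>s. mv A N (\<lambda>j. g s *\<^sub>R f j (\<tau> - s)) i)"
    unfolding conv_def mv_scaleR ..
  also have "\<dots> = mv A N (\<lambda>j. conv g (f j) \<tau>) i"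
    unfolding conv_def by (rule integral_unique, rule hi_mv, rule integrable_integral, rule assms)
  finally show ?thesis .
qed

lemma conv_uminus: "conv g (\<lambda>x. - f x) \<tau> = - conv g f \<tau>"
  unfolding conv_def by simp

definition Qf where "Qf a N g lam F j t = lam 0 *\<^sub>R Phi a N F 0 j t + conv g (Phi a N F 0 j) t"
definition Q1f where "Q1f a N g lam F j t = lam 0 *\<^sub>R Phi a N F 1 j t + conv g (Phi a N F 1 j) t"
definition Pf where "Pf a N g lam F j t = integral {0..t} (Qf a N g lam F j)"

context
  fixes a :: "real \<Rightarrow> real" and N :: nat and T :: real and lam g :: "real \<Rightarrow> real" and F :: "nat \<Rightarrow> complex"
  assumes gint: "g absolutely_integrable_on {0..T}"
    and glam: "\<And>t. t \<in> {0..T} \<Longrightarrow> (g has_integral (lam t - lam 0)) {0..t}"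
begin

lemma PhiD: "j \<in> {1..N} \<Longrightarrow> (Phi a N F k j has_vector_derivative Phi a N F (Suc k) j x) (at x)"
  by (rule Phi_deriv)

lemma Phi_cUNIV: "j \<in> {1..N} \<Longrightarrow> continuous_on UNIV (Phi a N F k j)"
  by (rule Phi_cont)

lemma dconv0: "j \<in> {1..N} \<Longrightarrow> t \<in> {0..T} \<Longrightarrow>
   (conv g (Phi a N F 0 j) has_vector_derivative conv g (Phi a N F 1 j) t) (at t within {0..T})"
proof -
  assume j: "j \<in> {1..N}" and t: "t \<in> {0..T}"
  have d1: "(Phi a N F 0 j has_vector_derivative Phi a N F 1 j x) (at x)" for x using PhiD[OF j, of 0 x] by simp
  have d2: "(Phi a N F 1 j has_vector_derivative Phi a N F 2 j x) (at x)" for x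
    using PhiD[OF j, of 1 x] by (simp add: numeral_2_eq_2)
  show ?thesis by (rule conv_deriv'[OF gint d1 d2 Phi_cUNIV[OF j] Phi0 t])
qed

lemma dQ: "j \<in> {1..N} \<Longrightarrow> t \<in> {0..T} \<Longrightarrow>
   (Qf a N g lam F j has_vector_derivative Q1f a N g lam F j t) (at t within {0..T})"
  unfolding Qf_def Q1f_def
proof -
  assume j: "j \<in> {1..N}" and t: "t \<in> {0..T}"
  have d1: "(Phi a N F 0 j has_vector_derivative Phi a N F 1 j t) (at t within {0..T})"
    using PhiD[OF j, of 0 t] has_vector_derivative_at_within by simp
  show "((\<lambda>t. lam 0 *\<^sub>R Phi a N F 0 j t + conv g (Phi a N F 0 j) t) has_vector_derivative
      lam 0 *\<^sub>R Phi a N F 1 j t + conv g (Phi a N F 1 j) t) (at t within {0..T})"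
    by (rule has_vector_derivative_add[OF bounded_linear.has_vector_derivative[OF bounded_linear_scaleR_right d1] dconv0[OF j t]])
qed

lemma cQ: "j \<in> {1..N} \<Longrightarrow> continuous_on {0..T} (Qf a N g lam F j)"
  using dQ by (meson continuous_on_eq_continuous_within has_vector_derivative_continuous)

lemma dP: "j \<in> {1..N} \<Longrightarrow> t \<in> {0..T} \<Longrightarrow>
   (Pf a N g lam F j has_vector_derivative Qf a N g lam F j t) (at t within {0..T})"
  unfolding Pf_def by (rule integral_has_vector_derivative[OF cQ])

lemma P0: "Pf a N g lam F j 0 = 0" unfolding Pf_def by simp
lemma Q0: "Qf a N g lam F j 0 = 0" unfolding Qf_def conv_def by (simp add: Phi0)

definition H where "H j t = conv g (\<lambda>x. Phi a N F 1 j x - F j) t"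

lemma dH: "j \<in> {1..N} \<Longrightarrow> t \<in> {0..T} \<Longrightarrow>
   (H j has_vector_derivative conv g (Phi a N F 2 j) t) (at t within {0..T})"
  unfolding H_def
proof (rule conv_deriv'[OF gint])
  assume j: "j \<in> {1..N}"
  show "((\<lambda>x. Phi a N F 1 j x - F j) has_vector_derivative Phi a N F 2 j x) (at x)" for x
    using PhiD[OF j, of 1 x] by (simp add: numeral_2_eq_2 has_vector_derivative_diff_const)
  show "(Phi a N F 2 j has_vector_derivative Phi a N F 3 j x) (at x)" for x
    using PhiD[OF j, of 2 x] by (simp add: numeral_3_eq_3 numeral_2_eq_2)
  show "continuous_on UNIV (Phi a N F 3 j)" by (rule Phi_cUNIV[OF j])
  show "Phi a N F 1 j 0 - F j = 0" using Phi1[of a N F j] by simp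
qed

lemma Hval: "j \<in> {1..N} \<Longrightarrow> t \<in> {0..T} \<Longrightarrow> H j t = conv g (Phi a N F 1 j) t - (lam t - lam 0) *\<^sub>R F j"
proof -
  assume j: "j \<in> {1..N}" and t: "t \<in> {0..T}"
  have sub: "{0..t} \<subseteq> {0..T}" using t by auto
  have i1: "(\<lambda>s. g s *\<^sub>R Phi a N F 1 j (t - s)) integrable_on {0..t}"
    by (rule int_prod'[OF gint sub]) (rule cont_shift[OF Phi_cUNIV[OF j]])
  have i2: "((\<lambda>s. g s *\<^sub>R F j) has_integral ((lam t - lam 0) *\<^sub>R F j)) {0..t}"
    by (rule has_integral_scaleR_left[OF glam[OF t]])
  have "H j t = integral {0..t} (\<lambda>s. g s *\<^sub>R Phi a N F 1 j (t - s) - g s *\<^sub>R F j)"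
    unfolding H_def conv_def by (simp add: scaleR_right_diff_distrib)
  also have "\<dots> = conv g (Phi a N F 1 j) t - (lam t - lam 0) *\<^sub>R F j"
    unfolding integral_diff[OF i1 has_integral_integrable[OF i2]] integral_unique[OF i2] conv_def ..
  finally show ?thesis .
qed


lemma conv0: "conv g \<phi> 0 = 0" unfolding conv_def by simp

lemma ipk: "j \<in> {1..N} \<Longrightarrow> \<tau> \<in> {0..T} \<Longrightarrow> (\<lambda>s. g s *\<^sub>R Phi a N F k j (\<tau> - s)) integrable_on {0..\<tau>}"
  by (rule int_prod'[OF gint]) (auto intro: cont_shift[OF Phi_cUNIV])

lemma Hint:
  assumes j: "j \<in> {1..N}" and t: "t \<in> {0..T}"
  shows "((\<lambda>\<tau>. lam 0 *\<^sub>R Phi a N F 2 j \<tau> + conv g (Phi a N F 2 j) \<tau>) has_integral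
           (Q1f a N g lam F j t - complex_of_real (lam t) * F j)) {0..t}"
proof -
  define R where "R \<tau> = lam 0 *\<^sub>R Phi a N F 1 j \<tau> + H j \<tau>" for \<tau>
  have sub: "{0..t} \<subseteq> {0..T}" using t by auto
  have "((\<lambda>\<tau>. lam 0 *\<^sub>R Phi a N F 2 j \<tau> + conv g (Phi a N F 2 j) \<tau>) has_integral (R t - R 0)) {0..t}"
  proof (rule fundamental_theorem_of_calculus)
    show "0 \<le> t" using t by simp
    fix x assume x: "x \<in> {0..t}"
    have xT: "x \<in> {0..T}" using x sub by auto
    have d1: "(Phi a N F 1 j has_vector_derivative Phi a N F 2 j x) (at x within {0..t})"
      using PhiD[OF j, of 1 x] has_vector_derivative_at_within by (simp add: numeral_2_eq_2)
    have d2: "(H j has_vector_derivative conv g (Phi a N F 2 j) x) (at x within {0..t})"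
      by (rule has_vector_derivative_within_subset[OF dH[OF j xT] sub])
    show "(R has_vector_derivative lam 0 *\<^sub>R Phi a N F 2 j x + conv g (Phi a N F 2 j) x) (at x within {0..t})"
      unfolding R_def
      by (rule has_vector_derivative_add[OF bounded_linear.has_vector_derivative[OF bounded_linear_scaleR_right d1] d2])
  qed
  moreover have "R t - R 0 = Q1f a N g lam F j t - complex_of_real (lam t) * F j"
  proof -
    have h0: "H j 0 = 0" using Hval[OF j, of 0] t by (simp add: conv0)
    have "R t - R 0 = lam 0 *\<^sub>R Phi a N F 1 j t + (conv g (Phi a N F 1 j) t - (lam t - lam 0) *\<^sub>R F j) - lam 0 *\<^sub>R F j"
      unfolding R_def Hval[OF j t] h0 using Phi1[of a N F j] by simp
    also have "\<dots> = Q1f a N g lam F j t - complex_of_real (lam t) * F j"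
      unfolding Q1f_def by (simp add: scaleR_conv_of_real algebra_simps)
    finally show ?thesis .
  qed
  ultimately show ?thesis by simp
qed

lemma integrand:
  assumes \<tau>: "\<tau> \<in> {0..T}" and i: "i \<in> {1..N}"
  shows "mv (Aa a N) N (\<lambda>j. Qf a N g lam F j \<tau>) i
      = - mv (Mh N) N (\<lambda>j. lam 0 *\<^sub>R Phi a N F 2 j \<tau> + conv g (Phi a N F 2 j) \<tau>) i"
proof -
  have ode: "mv (Aa a N) N (\<lambda>j. Phi a N F 0 j x) i = - mv (Mh N) N (\<lambda>j. Phi a N F 2 j x) i" for x
  proof -
    have "mv (Mh N) N (\<lambda>j. Phi a N F 2 j x) i + (mv (Kh N) N (\<lambda>j. Phi a N F 0 j x) i + mv (Lh a N) N (\<lambda>j. Phi a N F 0 j x) i) = 0"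
      using Phi_ode[OF i, of a F 0 x] by (simp add: numeral_2_eq_2 add.assoc)
    then show ?thesis unfolding Amv_Aa[symmetric] Amv_def by (simp add: eq_neg_iff_add_eq_0 add.commute)
  qed
  have "mv (Aa a N) N (\<lambda>j. Qf a N g lam F j \<tau>) i
      = lam 0 *\<^sub>R mv (Aa a N) N (\<lambda>j. Phi a N F 0 j \<tau>) i + mv (Aa a N) N (\<lambda>j. conv g (Phi a N F 0 j) \<tau>) i"
    unfolding Qf_def mv_add mv_scaleR ..
  also have "mv (Aa a N) N (\<lambda>j. conv g (Phi a N F 0 j) \<tau>) i = conv g (\<lambda>x. mv (Aa a N) N (\<lambda>j. Phi a N F 0 j x) i) \<tau>"
    by (rule conv_mv[symmetric]) (rule ipk[OF _ \<tau>])
  also have "\<dots> = conv g (\<lambda>x. - mv (Mh N) N (\<lambda>j. Phi a N F 2 j x) i) \<tau>" unfolding ode ..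
  also have "\<dots> = - mv (Mh N) N (\<lambda>j. conv g (Phi a N F 2 j) \<tau>) i"
    unfolding conv_uminus by (subst conv_mv) (auto intro: ipk[OF _ \<tau>])
  finally show ?thesis unfolding ode mv_add mv_scaleR by (simp add: algebra_simps)
qed

lemma ODE:
  assumes t: "t \<in> {0..T}" and i: "i \<in> {1..N}"
  shows "mv (Mh N) N (\<lambda>j. Q1f a N g lam F j t) i + mv (Kh N) N (\<lambda>j. Pf a N g lam F j t) i
         + mv (Lh a N) N (\<lambda>j. Pf a N g lam F j t) i = complex_of_real (lam t) * mv (Mh N) N F i"
proof -
  have sub: "{0..t} \<subseteq> {0..T}" using t by auto
  have h1: "((\<lambda>\<tau>. mv (Aa a N) N (\<lambda>j. Qf a N g lam F j \<tau>) i) has_integral mv (Aa a N) N (\<lambda>j. Pf a N g lam F j t) i) {0..t}"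
  proof (rule hi_mv)
    fix j assume j: "j \<in> {1..N}"
    show "(Qf a N g lam F j has_integral Pf a N g lam F j t) {0..t}"
      unfolding Pf_def
      by (rule integrable_integral, rule integrable_continuous_interval, rule continuous_on_subset[OF cQ[OF j] sub])
  qed
  have h2: "((\<lambda>\<tau>. mv (Aa a N) N (\<lambda>j. Qf a N g lam F j \<tau>) i) has_integral
       - mv (Mh N) N (\<lambda>j. Q1f a N g lam F j t - complex_of_real (lam t) * F j) i) {0..t}"
  proof (rule has_integral_eq[OF _ has_integral_neg[OF hi_mv[OF Hint]]])
    fix x assume x: "x \<in> {0..t}"
    then have xT: "x \<in> {0..T}" using sub by auto
    show "- mv (Mh N) N (\<lambda>j. lam 0 *\<^sub>R Phi a N F 2 j x + conv g (Phi a N F 2 j) x) i = mv (Aa a N) N (\<lambda>j. Qf a N g lam F j x) i"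
      by (rule integrand[OF xT i, symmetric])
  qed (use t in auto)
  have "mv (Aa a N) N (\<lambda>j. Pf a N g lam F j t) i = - mv (Mh N) N (\<lambda>j. Q1f a N g lam F j t - complex_of_real (lam t) * F j) i"
    by (rule has_integral_unique[OF h1 h2])
  then show ?thesis
    unfolding Amv_Aa[symmetric] Amv_def mv_diff mv_cmult by (simp add: algebra_simps)
qed

end

lemma has_integral_flip:
  fixes f :: "real \<Rightarrow> 'b::real_normed_vector"
  assumes "(f has_integral I) {0..t}"
  shows "((\<lambda>s. f (t - s)) has_integral I) {0..t}"
proof -
  have "((\<lambda>x. f (x + t)) has_integral I) {0 - t..t - t}" by (rule has_integral_shift_real_ivl[OF assms])
  then have "((\<lambda>x. (\<lambda>x. f (x + t)) (- x)) has_integral I) {- 0..- (- t)}"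
    by (subst has_integral_reflect_real) simp
  then show ?thesis by (simp add: algebra_simps)
qed

lemma amgm_sqrt:
  fixes x P Q :: real
  assumes P: "P \<ge> 0" and Q: "Q \<ge> 0" and h: "\<And>c. c > 0 \<Longrightarrow> x \<le> (c * P + Q / c) / 2"
  shows "x \<le> sqrt (P * Q)"
proof (cases "P > 0 \<and> Q > 0")
  case True
  define c where "c = sqrt Q / sqrt P"
  have c: "c > 0" unfolding c_def using True by simp
  have "c * P = sqrt Q * sqrt P" unfolding c_def using True
    by (simp add: field_simps)
  moreover have "Q / c = sqrt Q * sqrt P" unfolding c_def using True
    by (simp add: field_simps)
  ultimately show ?thesis using h[OF c] by (simp add: real_sqrt_mult)
next
  case False
  then have z: "P * Q = 0" using P Q by auto
  show ?thesis
  proof (rule ccontr)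
    assume "\<not> x \<le> sqrt (P * Q)"
    then have x: "x > 0" using z by simp
    show False
    proof (cases "P = 0")
      case True
      define c where "c = (Q + 1) / x"
      have c: "c > 0" unfolding c_def using x Q by simp
      have "(c * P + Q / c) / 2 = Q * x / (2 * (Q + 1))" unfolding c_def True by simp
      also have "\<dots> < x"
      proof -
        have "Q * x < 2 * (Q + 1) * x" using x Q by (simp add: mult_strict_right_mono)
        then show ?thesis using Q by (simp add: divide_less_eq mult.commute)
      qed
      finally show False using h[OF c] by simp
    next
      case False
      then have Q0: "Q = 0" using z by simp
      define c where "c = x / (P + 1)"
      have c: "c > 0" unfolding c_def using x P by simp
      have "(c * P + Q / c) / 2 = x * P / (2 * (P + 1))" unfolding c_def Q0 by simp
      also have "\<dots> < x"
      proof -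
        have "x * P < x * (2 * (P + 1))" using x P by (simp add: mult_strict_left_mono)
        then show ?thesis using P by (simp add: divide_less_eq)
      qed
      finally show False using h[OF c] by simp
    qed
  qed
qed

lemma amgm_pt:
  fixes a b c :: real
  assumes c: "c > 0"
  shows "a * b \<le> (c * a^2 + b^2 / c) / 2"
proof -
  have "0 \<le> (c * a - b)^2" by simp
  then have "2 * c * (a * b) \<le> c^2 * a^2 + b^2" by (simp add: power2_eq_square algebra_simps)
  then have "a * b \<le> (c^2 * a^2 + b^2) / (2 * c)" using c by (simp add: pos_le_divide_eq mult_ac)
  moreover have "(c * a^2 + b^2 / c) / 2 = (c^2 * a^2 + b^2) / (2 * c)" using c by (simp add: field_simps power2_eq_square)
  ultimately show ?thesis by linarith
qed


lemma conv_norm_bound: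
  fixes \<phi> :: "real \<Rightarrow> complex"
  assumes g: "g absolutely_integrable_on {0..T}" and g2: "(\<lambda>s. (g s)^2) integrable_on {0..T}"
    and c\<phi>: "continuous_on UNIV \<phi>" and t: "t \<in> {0..T}"
  shows "cmod (conv g \<phi> t) \<le> sqrt (integral {0..T} (\<lambda>s. (g s)^2) * integral {0..t} (\<lambda>s. (cmod (\<phi> s))^2))"
proof -
  have sub: "{0..t} \<subseteq> {0..T}" using t by auto
  define G2 where "G2 = integral {0..T} (\<lambda>s. (g s)^2)"
  define Gt where "Gt = integral {0..t} (\<lambda>s. (g s)^2)"
  define Et where "Et = integral {0..t} (\<lambda>s. (cmod (\<phi> s))^2)"
  have cs: "continuous_on {0..t} (\<lambda>s. \<phi> (t - s))" by (rule cont_shift[OF c\<phi>])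
  have ai: "(\<lambda>s. g s *\<^sub>R \<phi> (t - s)) absolutely_integrable_on {0..t}" by (rule int_prod[OF g sub cs])
  have ni: "(\<lambda>s. \<bar>g s\<bar> * cmod (\<phi> (t - s))) integrable_on {0..t}"
    using ai unfolding absolutely_integrable_on_def by simp
  have A: "cmod (conv g \<phi> t) \<le> integral {0..t} (\<lambda>s. \<bar>g s\<bar> * cmod (\<phi> (t - s)))"
    unfolding conv_def
    by (rule integral_norm_bound_integral) (use ai ni in \<open>auto simp: absolutely_integrable_on_def\<close>)
  have hg: "((\<lambda>s. (g s)^2) has_integral Gt) {0..t}"
    unfolding Gt_def by (rule integrable_integral, rule integrable_subinterval_real[OF g2 sub])
  have c2: "continuous_on {0..t} (\<lambda>s. (cmod (\<phi> s))^2)"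
    by (intro continuous_intros continuous_on_subset[OF c\<phi>]) auto
  have h\<phi>0: "((\<lambda>s. (cmod (\<phi> s))^2) has_integral Et) {0..t}"
    unfolding Et_def by (rule integrable_integral, rule integrable_continuous_interval[OF c2])
  have h\<phi>: "((\<lambda>s. (cmod (\<phi> (t - s)))^2) has_integral Et) {0..t}"
    using has_integral_flip[OF h\<phi>0] by simp
  have G2: "G2 \<ge> 0" unfolding G2_def by (rule integral_nonneg[OF g2]) simp
  have Et: "Et \<ge> 0" unfolding Et_def by (rule integral_nonneg[OF integrable_continuous_interval[OF c2]]) simp
  have GtG2: "Gt \<le> G2" unfolding Gt_def G2_def
    by (rule integral_subset_le[OF sub integrable_subinterval_real[OF g2 sub] g2]) simp
  have B: "integral {0..t} (\<lambda>s. \<bar>g s\<bar> * cmod (\<phi> (t - s))) \<le> (c * G2 + Et / c) / 2" if c: "c > 0" for c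
  proof -
    have hh: "((\<lambda>s. (1/2) * (c * (g s)^2) + (1 / (2 * c)) * (cmod (\<phi> (t - s)))^2) has_integral
        ((1/2) * (c * Gt) + (1 / (2 * c)) * Et)) {0..t}"
      by (intro has_integral_add has_integral_mult_right hg h\<phi>)
    have "integral {0..t} (\<lambda>s. \<bar>g s\<bar> * cmod (\<phi> (t - s))) \<le> (1/2) * (c * Gt) + (1 / (2 * c)) * Et"
    proof (rule has_integral_le[OF integrable_integral[OF ni] hh])
      fix s assume "s \<in> {0..t}"
      have "\<bar>g s\<bar> * cmod (\<phi> (t - s)) \<le> (c * \<bar>g s\<bar>^2 + (cmod (\<phi> (t - s)))^2 / c) / 2" by (rule amgm_pt[OF c])
      then show "\<bar>g s\<bar> * cmod (\<phi> (t - s)) \<le> (1/2) * (c * (g s)^2) + (1 / (2 * c)) * (cmod (\<phi> (t - s)))^2"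
        by (simp add: field_simps)
    qed
    also have "\<dots> \<le> (c * G2 + Et / c) / 2" using GtG2 c by (simp add: field_simps)
    finally show ?thesis .
  qed
  have "integral {0..t} (\<lambda>s. \<bar>g s\<bar> * cmod (\<phi> (t - s))) \<le> sqrt (G2 * Et)"
    by (rule amgm_sqrt[OF G2 Et B])
  with A show ?thesis unfolding G2_def Et_def by simp
qed

definition Cv :: "real \<Rightarrow> real \<Rightarrow> real \<Rightarrow> real" where
  "Cv l0 G2 T = 2 / l0^2 * exp (2 * G2 / l0^2 * T)"

lemma volterra:
  fixes \<phi> y :: "real \<Rightarrow> complex"
  assumes g: "g absolutely_integrable_on {0..T}" and g2: "(\<lambda>s. (g s)^2) integrable_on {0..T}"
    and l0: "l0 \<noteq> 0" and c\<phi>: "continuous_on UNIV \<phi>" and cy: "continuous_on {0..T} y"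
    and yeq: "\<And>t. t \<in> {0..T} \<Longrightarrow> y t = l0 *\<^sub>R \<phi> t + conv g \<phi> t" and T0: "0 \<le> T"
  shows "integral {0..T} (\<lambda>t. (cmod (\<phi> t))^2) \<le> Cv l0 (integral {0..T} (\<lambda>s. (g s)^2)) T * integral {0..T} (\<lambda>t. (cmod (y t))^2)"
proof -
  define G2 where "G2 = integral {0..T} (\<lambda>s. (g s)^2)"
  define \<alpha> where "\<alpha> = 2 / l0^2"
  define \<beta> where "\<beta> = 2 * G2 / l0^2"
  define E where "E t = integral {0..t} (\<lambda>s. (cmod (\<phi> s))^2)" for t
  define Yi where "Yi t = integral {0..t} (\<lambda>s. (cmod (y s))^2)" for t
  have G2: "G2 \<ge> 0" unfolding G2_def by (rule integral_nonneg[OF g2]) simp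
  have l2: "l0^2 > 0" using l0 by simp
  have \<alpha>: "\<alpha> \<ge> 0" unfolding \<alpha>_def by simp
  have \<beta>: "\<beta> \<ge> 0" unfolding \<beta>_def using G2 by simp
  have c2: "continuous_on {0..T} (\<lambda>s. (cmod (\<phi> s))^2)"
    by (intro continuous_intros continuous_on_subset[OF c\<phi>]) auto
  have cy2: "continuous_on {0..T} (\<lambda>s. (cmod (y s))^2)" by (intro continuous_intros cy)
  have dE: "(E has_real_derivative (cmod (\<phi> t))^2) (at t within {0..T})" if "t \<in> {0..T}" for t
    unfolding E_def has_real_derivative_iff_has_vector_derivative
    by (rule integral_has_vector_derivative[OF c2 that])
  have dY: "(Yi has_real_derivative (cmod (y t))^2) (at t within {0..T})" if "t \<in> {0..T}" for t
    unfolding Yi_def has_real_derivative_iff_has_vector_derivative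
    by (rule integral_has_vector_derivative[OF cy2 that])
  have pt: "(cmod (\<phi> t))^2 \<le> \<alpha> * (cmod (y t))^2 + \<beta> * E t" if t: "t \<in> {0..T}" for t
  proof -
    define s where "s = sqrt (G2 * E t)"
    have Et: "E t \<ge> 0" unfolding E_def
      by (rule integral_nonneg[OF integrable_continuous_interval]) (auto intro!: continuous_intros continuous_on_subset[OF c\<phi>])
    have s2: "s^2 = G2 * E t" unfolding s_def using G2 Et by simp
    have "\<bar>l0\<bar> * cmod (\<phi> t) = cmod (y t - conv g \<phi> t)" using yeq[OF t] by simp
    also have "\<dots> \<le> cmod (y t) + cmod (conv g \<phi> t)" by (rule norm_triangle_ineq4)
    also have "\<dots> \<le> cmod (y t) + s" unfolding s_def E_def G2_def using conv_norm_bound[OF g g2 c\<phi> t] by simp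
    finally have 1: "\<bar>l0\<bar> * cmod (\<phi> t) \<le> cmod (y t) + s" .
    have "l0^2 * (cmod (\<phi> t))^2 = (\<bar>l0\<bar> * cmod (\<phi> t))^2" by (simp add: power_mult_distrib)
    also have "\<dots> \<le> (cmod (y t) + s)^2" by (rule power_mono[OF 1]) simp
    also have "\<dots> \<le> 2 * (cmod (y t))^2 + 2 * s^2" using two_mult_le[of "cmod (y t)" s] by (simp add: power2_sum)
    finally have "l0^2 * (cmod (\<phi> t))^2 \<le> 2 * (cmod (y t))^2 + 2 * (G2 * E t)" unfolding s2 .
    then have "(cmod (\<phi> t))^2 \<le> (2 * (cmod (y t))^2 + 2 * (G2 * E t)) / l0^2" using l2 by (simp add: field_simps)
    also have "\<dots> = \<alpha> * (cmod (y t))^2 + \<beta> * E t" unfolding \<alpha>_def \<beta>_def by (simp add: add_divide_distrib algebra_simps)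
    finally show ?thesis .
  qed
  define f where "f t = exp (- \<beta> * t) * E t - \<alpha> * Yi t" for t
  have cont_f: "continuous_on {0..T} f"
  proof -
    have "continuous_on {0..T} E" using dE by (meson DERIV_continuous continuous_on_eq_continuous_within)
    moreover have "continuous_on {0..T} Yi" using dY by (meson DERIV_continuous continuous_on_eq_continuous_within)
    ultimately show ?thesis unfolding f_def by (intro continuous_intros)
  qed
  have "f 0 \<ge> f T"
  proof (rule DERIV_nonpos_imp_decreasing_open[of 0 T f])
    show "0 \<le> T" by (rule T0)
    show "continuous_on {0..T} f" by (rule cont_f)
    fix x assume x: "0 < x" "x < T"
    have xT: "x \<in> {0..T}" using x by auto
    have at: "at x within {0..T} = at x" using at_within_Icc_at[of 0 x T] x by simp
    have dEx: "(E has_real_derivative (cmod (\<phi> x))^2) (at x)" using dE[OF xT] at by simp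
    have dYx: "(Yi has_real_derivative (cmod (y x))^2) (at x)" using dY[OF xT] at by simp
    have "((\<lambda>x. - \<beta> * x) has_real_derivative (- \<beta> * 1)) (at x)" by (rule DERIV_cmult[OF DERIV_ident])
    then have dexp: "((\<lambda>x. exp (- \<beta> * x)) has_real_derivative (exp (- \<beta> * x) * (- \<beta> * 1))) (at x)"
      by (rule DERIV_fun_exp)
    have "(f has_real_derivative (exp (- \<beta> * x) * (cmod (\<phi> x))^2 + exp (- \<beta> * x) * (- \<beta> * 1) * E x - \<alpha> * (cmod (y x))^2)) (at x)"
      unfolding f_def by (intro DERIV_diff DERIV_mult' dexp dEx DERIV_cmult dYx)
    moreover have "exp (- \<beta> * x) * (cmod (\<phi> x))^2 + exp (- \<beta> * x) * (- \<beta> * 1) * E x - \<alpha> * (cmod (y x))^2 \<le> 0"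
    proof -
      have e1: "exp (- \<beta> * x) \<le> 1" using \<beta> x by simp
      have "exp (- \<beta> * x) * (cmod (\<phi> x))^2 \<le> exp (- \<beta> * x) * (\<alpha> * (cmod (y x))^2 + \<beta> * E x)"
        by (rule mult_left_mono[OF pt[OF xT]]) simp
      moreover have "exp (- \<beta> * x) * (\<alpha> * (cmod (y x))^2) \<le> \<alpha> * (cmod (y x))^2"
        using e1 \<alpha> by (simp add: mult_left_le_one_le)
      ultimately show ?thesis by (simp add: algebra_simps)
    qed
    ultimately show "\<exists>y. (f has_real_derivative y) (at x) \<and> y \<le> 0" by blast
  qed
  moreover have "f 0 = 0" unfolding f_def E_def Yi_def by simp
  ultimately have "exp (- \<beta> * T) * E T \<le> \<alpha> * Yi T" unfolding f_def by simp
  then have "exp (\<beta> * T) * (exp (- \<beta> * T) * E T) \<le> exp (\<beta> * T) * (\<alpha> * Yi T)" by simp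
  then have "E T \<le> \<alpha> * exp (\<beta> * T) * Yi T" by (simp add: exp_minus field_simps)
  then show ?thesis unfolding Cv_def E_def Yi_def \<alpha>_def \<beta>_def G2_def by simp
qed

lemma conv_scaleR: "conv g (\<lambda>x. c *\<^sub>R f x) t = c *\<^sub>R conv g f t"
proof -
  have e: "(\<lambda>s. g s *\<^sub>R (c *\<^sub>R f (t - s))) = (\<lambda>s. c *\<^sub>R (g s *\<^sub>R f (t - s)))" by (simp add: algebra_simps)
  show ?thesis unfolding conv_def e integral_cmul ..
qed

lemma cQ1:
  assumes gint: "g absolutely_integrable_on {0..T}"
    and glam: "\<And>t. t \<in> {0..T} \<Longrightarrow> (g has_integral (lam t - lam 0)) {0..t}"
    and j: "j \<in> {1..N}"
  shows "continuous_on {0..T} (Q1f a N g lam F j)"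
proof -
  have gi: "g integrable_on {0..T}" using gint absolutely_integrable_on_def by blast
  have cI: "continuous_on {0..T} (\<lambda>t. integral {0..t} g)" by (rule indefinite_integral_continuous_1[OF gi])
  have cl: "continuous_on {0..T} (\<lambda>t. lam t - lam 0)"
    by (rule continuous_on_eq[OF cI]) (use glam integral_unique in blast)
  have cH: "continuous_on {0..T} (H a N g F j)"
    using dH[OF gint glam j] by (meson continuous_on_eq_continuous_within has_vector_derivative_continuous)
  have c1: "continuous_on {0..T} (Phi a N F 1 j)" by (rule Phi_cont[OF j])
  have "continuous_on {0..T} (\<lambda>t. lam 0 *\<^sub>R Phi a N F 1 j t + (H a N g F j t + (lam t - lam 0) *\<^sub>R F j))"
    by (intro continuous_intros c1 cH cl)
  then show ?thesis
  proof (rule continuous_on_eq)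
    fix t assume t: "t \<in> {0..T}"
    show "lam 0 *\<^sub>R Phi a N F 1 j t + (H a N g F j t + (lam t - lam 0) *\<^sub>R F j) = Q1f a N g lam F j t"
      using Hval[OF gint glam j t] by (simp add: Q1f_def)
  qed
qed

lemma scaleR_div: "(1 / h) *\<^sub>R (z::complex) = z / complex_of_real h"
  by (simp add: scaleR_conv_of_real divide_inverse mult.commute of_real_inverse)


lemma main_bound:
  fixes a :: "real \<Rightarrow> real" and T :: real and lam g :: "real \<Rightarrow> real" and \<kappa>0 :: real
    and Fh Ft :: "nat \<Rightarrow> complex" and Vh Vh' Vh'' Vt Vt' Vt'' U U' U'' :: "nat \<Rightarrow> real \<Rightarrow> complex"
  assumes gint: "g absolutely_integrable_on {0..T}" and g2: "(\<lambda>s. (g s)^2) integrable_on {0..T}"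
    and glam: "\<And>t. t \<in> {0..T} \<Longrightarrow> (g has_integral (lam t - lam 0)) {0..t}"
    and l0: "lam 0 \<noteq> 0" and Tpos: "T > 0" and \<kappa>0: "\<kappa>0 > 0" and N: "N \<ge> 1"
    and obs: "\<And>U U' U''. is_sol a N T (\<lambda>_. 0) (\<lambda>_. 0) U U' U'' \<Longrightarrow>
      integral {0..T} (\<lambda>t. (cmod (U 1 t / hN N))\<^sup>2 + (cmod (U' 1 t / 2))\<^sup>2)
        \<ge> \<kappa>0 * (norm1_sq a N (\<lambda>j. U j 0) + (normM N (\<lambda>j. U' j 0))\<^sup>2)"
    and sh: "is_sol a N T (\<lambda>t. complex_of_real (lam t)) Fh Vh Vh' Vh''"
    and ih: "\<forall>j\<in>{1..N}. Vh j 0 = 0 \<and> Vh' j 0 = 0"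
    and st: "is_sol a N T (\<lambda>t. complex_of_real (lam t)) Ft Vt Vt' Vt''"
    and it: "\<forall>j\<in>{1..N}. Vt j 0 = 0 \<and> Vt' j 0 = 0"
  shows "normM N (\<lambda>j. Fh j - Ft j)
       \<le> (sqrt (Cv (lam 0) (integral {0..T} (\<lambda>s. (g s)^2)) T / \<kappa>0) + 1) * sqrt (integral {0..T} (\<lambda>t.
            (cmod ((Vh' 1 t + U 1 t) / hN N - (Vt' 1 t + U 1 t) / hN N))\<^sup>2
          + (cmod ((Vh'' 1 t + U' 1 t) / 2 - (Vt'' 1 t + U' 1 t) / 2))\<^sup>2))"
proof -
  define F where "F j = Fh j - Ft j" for j
  define h where "h = hN N"
  define C where "C = Cv (lam 0) (integral {0..T} (\<lambda>s. (g s)^2)) T"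
  define I where "I = integral {0..T} (\<lambda>t.
            (cmod ((Vh' 1 t + U 1 t) / hN N - (Vt' 1 t + U 1 t) / hN N))\<^sup>2
          + (cmod ((Vh'' 1 t + U' 1 t) / 2 - (Vt'' 1 t + U' 1 t) / 2))\<^sup>2)"
  have hpos: "h > 0" unfolding h_def by (rule hN_pos)
  have j1: "1 \<in> {1..N}" using N by simp
  have T0: "0 \<le> T" using Tpos by simp
  have Cpos: "C > 0" unfolding C_def Cv_def using l0 by simp
  define W where "W j t = Vh j t - Vt j t" for j t
  define W1 where "W1 j t = Vh' j t - Vt' j t" for j t
  define W2 where "W2 j t = Vh'' j t - Vt'' j t" for j t
  have shd: "\<And>j t. j \<in> {1..N} \<Longrightarrow> t \<in> {0..T} \<Longrightarrow> (Vh j has_vector_derivative Vh' j t) (at t within {0..T}) \<and> (Vh' j has_vector_derivative Vh'' j t) (at t within {0..T})"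
    and sho: "\<And>t i. t \<in> {0..T} \<Longrightarrow> i \<in> {1..N} \<Longrightarrow> mv (Mh N) N (\<lambda>j. Vh'' j t) i + mv (Kh N) N (\<lambda>j. Vh j t) i + mv (Lh a N) N (\<lambda>j. Vh j t) i = complex_of_real (lam t) * mv (Mh N) N Fh i"
    using sh unfolding is_sol_def by blast+
  have std: "\<And>j t. j \<in> {1..N} \<Longrightarrow> t \<in> {0..T} \<Longrightarrow> (Vt j has_vector_derivative Vt' j t) (at t within {0..T}) \<and> (Vt' j has_vector_derivative Vt'' j t) (at t within {0..T})"
    and sto: "\<And>t i. t \<in> {0..T} \<Longrightarrow> i \<in> {1..N} \<Longrightarrow> mv (Mh N) N (\<lambda>j. Vt'' j t) i + mv (Kh N) N (\<lambda>j. Vt j t) i + mv (Lh a N) N (\<lambda>j. Vt j t) i = complex_of_real (lam t) * mv (Mh N) N Ft i"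
    using st unfolding is_sol_def by blast+
  define Y where "Y j t = W j t - Pf a N g lam F j t" for j t
  define Y1 where "Y1 j t = W1 j t - Qf a N g lam F j t" for j t
  define Y2 where "Y2 j t = W2 j t - Q1f a N g lam F j t" for j t
  have dY: "(Y j has_vector_derivative Y1 j t) (at t within {0..T})" if "j \<in> {1..N}" "t \<in> {0..T}" for j t
    unfolding Y_def[abs_def] Y1_def W_def[abs_def] W1_def
    by (intro has_vector_derivative_diff dP[OF gint glam that]) (use shd[OF that] std[OF that] in auto)
  have dY1: "(Y1 j has_vector_derivative Y2 j t) (at t within {0..T})" if "j \<in> {1..N}" "t \<in> {0..T}" for j t
    unfolding Y1_def[abs_def] Y2_def W1_def[abs_def] W2_def
    by (intro has_vector_derivative_diff dQ[OF gint glam that]) (use shd[OF that] std[OF that] in auto)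
  have odeY: "mv (Mh N) N (\<lambda>j. Y2 j t) i + mv (Kh N) N (\<lambda>j. Y j t) i + mv (Lh a N) N (\<lambda>j. Y j t) i = 0"
    if t: "t \<in> {0..T}" and i: "i \<in> {1..N}" for t i
  proof -
    have "mv (Mh N) N (\<lambda>j. Y2 j t) i + mv (Kh N) N (\<lambda>j. Y j t) i + mv (Lh a N) N (\<lambda>j. Y j t) i
      = (mv (Mh N) N (\<lambda>j. Vh'' j t) i + mv (Kh N) N (\<lambda>j. Vh j t) i + mv (Lh a N) N (\<lambda>j. Vh j t) i)
      - (mv (Mh N) N (\<lambda>j. Vt'' j t) i + mv (Kh N) N (\<lambda>j. Vt j t) i + mv (Lh a N) N (\<lambda>j. Vt j t) i)
      - (mv (Mh N) N (\<lambda>j. Q1f a N g lam F j t) i + mv (Kh N) N (\<lambda>j. Pf a N g lam F j t) i + mv (Lh a N) N (\<lambda>j. Pf a N g lam F j t) i)"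
      unfolding Y_def Y2_def W_def W2_def mv_diff by (simp add: algebra_simps)
    also have "\<dots> = complex_of_real (lam t) * mv (Mh N) N Fh i - complex_of_real (lam t) * mv (Mh N) N Ft i
        - complex_of_real (lam t) * mv (Mh N) N F i"
      using sho[OF t i] sto[OF t i] ODE[OF gint glam t i, of a F] by simp
    also have "\<dots> = 0" unfolding F_def mv_diff by (simp add: algebra_simps)
    finally show ?thesis .
  qed
  have Y0: "Y j 0 = 0" if "j \<in> {1..N}" for j
    unfolding Y_def W_def using ih it that P0[OF gint glam] by simp
  have Y10: "Y1 j 0 = 0" if "j \<in> {1..N}" for j
    unfolding Y1_def W1_def using ih it that Q0[OF gint glam] by simp
  have Yz: "Y j t = 0 \<and> Y1 j t = 0" if "t \<in> {0..T}" "j \<in> {1..N}" for t j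
    by (rule uniq[OF T0 dY dY1 odeY Y0 Y10 that])
  have Y2z: "Y2 j t = 0" if t: "t \<in> {0..T}" and j: "j \<in> {1..N}" for t j
  proof -
    have "mv (Mh N) N (\<lambda>k. Y2 k t) i = 0" if i: "i \<in> {1..N}" for i
    proof -
      have "mv (Kh N) N (\<lambda>j. Y j t) i = mv (Kh N) N (\<lambda>j. 0) i" by (rule mv_cong) (use Yz[OF t] in auto)
      moreover have "mv (Lh a N) N (\<lambda>j. Y j t) i = mv (Lh a N) N (\<lambda>j. 0) i" by (rule mv_cong) (use Yz[OF t] in auto)
      ultimately show ?thesis using odeY[OF t i] by (simp add: mv_zero)
    qed
    then have "mv (Minv N) N (mv (Mh N) N (\<lambda>k. Y2 k t)) j = mv (Minv N) N (\<lambda>k. 0) j" by (intro mv_cong) auto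
    then show ?thesis using mv_Minv_M[OF j] by (simp add: mv_zero)
  qed
  have W1Q: "W1 1 t = Qf a N g lam F 1 t" if "t \<in> {0..T}" for t using Yz[OF that j1] unfolding Y1_def by simp
  have W2Q: "W2 1 t = Q1f a N g lam F 1 t" if "t \<in> {0..T}" for t using Y2z[OF that j1] unfolding Y2_def by simp
  define \<phi>a where "\<phi>a x = (1 / h) *\<^sub>R Phi a N F 0 1 x" for x
  define ya where "ya t = (1 / h) *\<^sub>R Qf a N g lam F 1 t" for t
  define \<phi>b where "\<phi>b x = (1 / 2) *\<^sub>R Phi a N F 1 1 x" for x
  define yb where "yb t = (1 / 2) *\<^sub>R Q1f a N g lam F 1 t" for t
  have va: "integral {0..T} (\<lambda>t. (cmod (\<phi>a t))^2) \<le> C * integral {0..T} (\<lambda>t. (cmod (ya t))^2)"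
    unfolding C_def
  proof (rule volterra[OF gint g2 l0 _ _ _ T0])
    show "continuous_on UNIV \<phi>a" unfolding \<phi>a_def by (intro continuous_intros Phi_cont[OF j1])
    show "continuous_on {0..T} ya" unfolding ya_def by (intro continuous_intros cQ[OF gint glam j1])
    show "ya t = lam 0 *\<^sub>R \<phi>a t + conv g \<phi>a t" for t
      unfolding ya_def \<phi>a_def[abs_def] conv_scaleR Qf_def by (simp add: scaleR_add_right)
  qed
  have vb: "integral {0..T} (\<lambda>t. (cmod (\<phi>b t))^2) \<le> C * integral {0..T} (\<lambda>t. (cmod (yb t))^2)"
    unfolding C_def
  proof (rule volterra[OF gint g2 l0 _ _ _ T0])
    show "continuous_on UNIV \<phi>b" unfolding \<phi>b_def by (intro continuous_intros Phi_cont[OF j1])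
    show "continuous_on {0..T} yb" unfolding yb_def by (intro continuous_intros cQ1[OF gint glam j1])
    show "yb t = lam 0 *\<^sub>R \<phi>b t + conv g \<phi>b t" for t
      unfolding yb_def \<phi>b_def[abs_def] conv_scaleR Q1f_def by (simp add: scaleR_add_right)
  qed
  have ob: "integral {0..T} (\<lambda>t. (cmod (Phi a N F 0 1 t / hN N))\<^sup>2 + (cmod (Phi a N F 1 1 t / 2))\<^sup>2)
        \<ge> \<kappa>0 * (norm1_sq a N (\<lambda>j. Phi a N F 0 j 0) + (normM N (\<lambda>j. Phi a N F 1 j 0))\<^sup>2)"
    by (rule obs[OF Phi_is_sol])
  have n1: "norm1_sq a N (\<lambda>j. Phi a N F 0 j 0) = 0"
    unfolding norm1_sq_def ip_def by (simp add: Phi0 mv_def)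
  have n2: "(\<lambda>j. Phi a N F 1 j 0) = F" by (rule ext) (rule Phi1)
  have cpa: "continuous_on {0..T} (\<lambda>t. (cmod (\<phi>a t))^2)" unfolding \<phi>a_def
    by (intro continuous_intros Phi_cont[OF j1])
  have cpb: "continuous_on {0..T} (\<lambda>t. (cmod (\<phi>b t))^2)" unfolding \<phi>b_def
    by (intro continuous_intros Phi_cont[OF j1])
  have cya: "continuous_on {0..T} (\<lambda>t. (cmod (ya t))^2)" unfolding ya_def
    by (intro continuous_intros cQ[OF gint glam j1])
  have cyb: "continuous_on {0..T} (\<lambda>t. (cmod (yb t))^2)" unfolding yb_def
    by (intro continuous_intros cQ1[OF gint glam j1])
  have "integral {0..T} (\<lambda>t. (cmod (Phi a N F 0 1 t / hN N))\<^sup>2 + (cmod (Phi a N F 1 1 t / 2))\<^sup>2)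
      = integral {0..T} (\<lambda>t. (cmod (\<phi>a t))^2 + (cmod (\<phi>b t))^2)"
    unfolding \<phi>a_def \<phi>b_def h_def scaleR_div by simp
  also have "\<dots> = integral {0..T} (\<lambda>t. (cmod (\<phi>a t))^2) + integral {0..T} (\<lambda>t. (cmod (\<phi>b t))^2)"
    by (rule integral_add) (intro integrable_continuous_interval cpa cpb)+
  also have "\<dots> \<le> C * integral {0..T} (\<lambda>t. (cmod (ya t))^2) + C * integral {0..T} (\<lambda>t. (cmod (yb t))^2)"
    using va vb by linarith
  also have "\<dots> = C * integral {0..T} (\<lambda>t. (cmod (ya t))^2 + (cmod (yb t))^2)"
    by (simp add: integral_add[OF integrable_continuous_interval[OF cya] integrable_continuous_interval[OF cyb]] algebra_simps)
  also have "integral {0..T} (\<lambda>t. (cmod (ya t))^2 + (cmod (yb t))^2) = I"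
    unfolding I_def
  proof (rule integral_cong)
    fix t assume t: "t \<in> {0..T}"
    have e1: "(Vh' 1 t + U 1 t) / complex_of_real (hN N) - (Vt' 1 t + U 1 t) / complex_of_real (hN N) = ya t"
      unfolding ya_def h_def scaleR_div W1Q[OF t, symmetric] W1_def by (simp add: diff_divide_distrib add_divide_distrib)
    have e2: "(Vh'' 1 t + U' 1 t) / 2 - (Vt'' 1 t + U' 1 t) / 2 = yb t"
      unfolding yb_def W2Q[OF t, symmetric] W2_def by (simp add: scaleR_conv_of_real diff_divide_distrib add_divide_distrib)
    show "(cmod (ya t))^2 + (cmod (yb t))^2 = (cmod ((Vh' 1 t + U 1 t) / complex_of_real (hN N) - (Vt' 1 t + U 1 t) / complex_of_real (hN N)))\<^sup>2
          + (cmod ((Vh'' 1 t + U' 1 t) / 2 - (Vt'' 1 t + U' 1 t) / 2))\<^sup>2"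
      unfolding e1 e2 ..
  qed
  finally have key: "\<kappa>0 * (normM N F)^2 \<le> C * I" using ob unfolding n1 n2 by simp
  have I0: "I \<ge> 0"
  proof -
    have "0 \<le> \<kappa>0 * (normM N F)^2" using \<kappa>0 by simp
    then have "0 \<le> C * I" using key by linarith
    then show ?thesis using Cpos by (simp add: zero_le_mult_iff)
  qed
  have "(normM N F)^2 \<le> C / \<kappa>0 * I" using key \<kappa>0 by (simp add: field_simps)
  then have "normM N F \<le> sqrt (C / \<kappa>0 * I)" by (rule real_le_rsqrt)
  also have "\<dots> = sqrt (C / \<kappa>0) * sqrt I" by (rule real_sqrt_mult)
  also have "\<dots> \<le> (sqrt (C / \<kappa>0) + 1) * sqrt I" using I0 by (simp add: algebra_simps)
  finally show ?thesis unfolding F_def[abs_def] C_def I_def .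
qed


theorem theorem2:
  fixes a :: "real \<Rightarrow> real" and T0 T :: real and lam :: "real \<Rightarrow> real"
  assumes a_nonneg: "\<forall>x\<in>{0..1}. a x \<ge> 0"
    and a_bdd: "\<exists>B. \<forall>x\<in>{0..1}. \<bar>a x\<bar> \<le> B"
    and a_meas: "set_borel_measurable lebesgue {0..1} a"
    and T0: "unif_obs_time a T0"
    and T: "T > T0"
    and lam: "H1 T lam" and lam0: "lam 0 \<noteq> 0"
  shows "\<exists>\<kappa>>0. \<forall>N\<ge>1. \<forall>Fh Ft Vh Vh' Vh'' Vt Vt' Vt'' U U' U''.
     is_sol a N T (\<lambda>t. complex_of_real (lam t)) Fh Vh Vh' Vh'' \<and>
     (\<forall>j\<in>{1..N}. Vh j 0 = 0 \<and> Vh' j 0 = 0) \<and>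
     is_sol a N T (\<lambda>t. complex_of_real (lam t)) Ft Vt Vt' Vt'' \<and>
     (\<forall>j\<in>{1..N}. Vt j 0 = 0 \<and> Vt' j 0 = 0) \<and>
     is_sol a N T (\<lambda>_. 0) (\<lambda>_. 0) U U' U'' \<longrightarrow>
     normM N (\<lambda>j. Fh j - Ft j)
       \<le> \<kappa> * sqrt (integral {0..T} (\<lambda>t.
            (cmod ((Vh' 1 t + U 1 t) / hN N - (Vt' 1 t + U 1 t) / hN N))\<^sup>2
          + (cmod ((Vh'' 1 t + U' 1 t) / 2 - (Vt'' 1 t + U' 1 t) / 2))\<^sup>2))"
proof -
  obtain \<kappa>0 where T0pos: "T0 > 0" and \<kappa>0: "\<kappa>0 > 0"
    and obs: "\<forall>N\<ge>1. \<forall>T>T0. \<forall>U U' U''.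
      is_sol a N T (\<lambda>_. 0) (\<lambda>_. 0) U U' U'' \<longrightarrow>
      integral {0..T} (\<lambda>t. (cmod (U 1 t / hN N))\<^sup>2 + (cmod (U' 1 t / 2))\<^sup>2)
        \<ge> \<kappa>0 * (norm1_sq a N (\<lambda>j. U j 0) + (normM N (\<lambda>j. U' j 0))\<^sup>2)"
    using T0 unfolding unif_obs_time_def by blast
  obtain g where gint: "g absolutely_integrable_on {0..T}" and g2: "(\<lambda>t. (g t)\<^sup>2) integrable_on {0..T}"
    and glam: "\<forall>t\<in>{0..T}. (g has_integral (lam t - lam 0)) {0..t}"
    using lam unfolding H1_def by blast
  have glam': "\<And>t. t \<in> {0..T} \<Longrightarrow> (g has_integral (lam t - lam 0)) {0..t}" using glam by blast
  have Tpos: "T > 0" using T T0pos by simp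
  define \<kappa> where "\<kappa> = sqrt (Cv (lam 0) (integral {0..T} (\<lambda>s. (g s)^2)) T / \<kappa>0) + 1"
  have "Cv (lam 0) (integral {0..T} (\<lambda>s. (g s)^2)) T > 0" unfolding Cv_def using lam0 by simp
  then have "Cv (lam 0) (integral {0..T} (\<lambda>s. (g s)^2)) T / \<kappa>0 > 0" using \<kappa>0 by simp
  then have "sqrt (Cv (lam 0) (integral {0..T} (\<lambda>s. (g s)^2)) T / \<kappa>0) > 0" by simp
  then have \<kappa>pos: "\<kappa> > 0" unfolding \<kappa>_def by linarith
  show ?thesis
  proof (intro exI[of _ \<kappa>] conjI allI impI)
    show "\<kappa> > 0" by (rule \<kappa>pos)
  next
    fix N :: nat and Fh Ft :: "nat \<Rightarrow> complex" and Vh Vh' Vh'' Vt Vt' Vt'' U U' U'' :: "nat \<Rightarrow> real \<Rightarrow> complex"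
    assume N: "N \<ge> 1" and H: "is_sol a N T (\<lambda>t. complex_of_real (lam t)) Fh Vh Vh' Vh'' \<and>
     (\<forall>j\<in>{1..N}. Vh j 0 = 0 \<and> Vh' j 0 = 0) \<and>
     is_sol a N T (\<lambda>t. complex_of_real (lam t)) Ft Vt Vt' Vt'' \<and>
     (\<forall>j\<in>{1..N}. Vt j 0 = 0 \<and> Vt' j 0 = 0) \<and>
     is_sol a N T (\<lambda>_. 0) (\<lambda>_. 0) U U' U''"
    have obsN: "\<And>U U' U''. is_sol a N T (\<lambda>_. 0) (\<lambda>_. 0) U U' U'' \<Longrightarrow>
      integral {0..T} (\<lambda>t. (cmod (U 1 t / hN N))\<^sup>2 + (cmod (U' 1 t / 2))\<^sup>2)
        \<ge> \<kappa>0 * (norm1_sq a N (\<lambda>j. U j 0) + (normM N (\<lambda>j. U' j 0))\<^sup>2)"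
      using obs N T by blast
    have sh: "is_sol a N T (\<lambda>t. complex_of_real (lam t)) Fh Vh Vh' Vh''" using H by blast
    have ih: "\<forall>j\<in>{1..N}. Vh j 0 = 0 \<and> Vh' j 0 = 0" using H by blast
    have st: "is_sol a N T (\<lambda>t. complex_of_real (lam t)) Ft Vt Vt' Vt''" using H by blast
    have it: "\<forall>j\<in>{1..N}. Vt j 0 = 0 \<and> Vt' j 0 = 0" using H by blast
    show "normM N (\<lambda>j. Fh j - Ft j)
       \<le> \<kappa> * sqrt (integral {0..T} (\<lambda>t.
            (cmod ((Vh' 1 t + U 1 t) / hN N - (Vt' 1 t + U 1 t) / hN N))\<^sup>2
          + (cmod ((Vh'' 1 t + U' 1 t) / 2 - (Vt'' 1 t + U' 1 t) / 2))\<^sup>2))"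
      unfolding \<kappa>_def by (rule main_bound[OF gint g2 glam' lam0 Tpos \<kappa>0 N obsN sh ih st it])
  qed
qed

end
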